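(* Let $d\ge1$, $\alpha\in(0,2)$, and let $K:\mathbb{R}^d\times\mathbb{R}^d\to(0,\infty)$ be positive, $1$-periodic and $C^2$ in $x$, symmetric in $y$, and satisfy, for some $C_K>0$ and for $\mathcal K\in\{K,|D_xK|,|D^2_xK|\}$, $C_K^{-1}\le\mathcal K(x,y)|y|^{d+\alpha}\le C_K$ for all $x,y$. Let $L^\alpha[u](x)=\int_{\mathbb{R}^d}(u(x)-u(x+y))K(x,y)\,dy$. For a real number $\lambda$ let $$h(x,t)=\frac{1}{1+e^{-\lambda t}|x|^{d+\alpha}}.$$ Then there is a constant $D>0$ depending only on $d$ (and $\alpha$) and $K$ such that for all $(x,t)$, $$\big|L^\alpha[h(\cdot,t)](x)\big|\le\frac{De^{-\alpha\lambda t/(d+\alpha)}}{1+e^{-\lambda t}|x|^{d+\alpha}}.$$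
   Context: $L^\alpha$ acts in the $x$ variable, with $t$ fixed. *)

theory Defs
  imports "HOL-Analysis.Analysis"
begin

definition Lalpha :: "('a::euclidean_space \<Rightarrow> 'a \<Rightarrow> real) \<Rightarrow> ('a \<Rightarrow> real) \<Rightarrow> 'a \<Rightarrow> real" where
  "Lalpha K u x = Lim (at_right 0)
     (\<lambda>\<epsilon>. LINT y|lborel. indicator {y. \<epsilon> < norm y} y * ((u x - u (x + y)) * K x y))"

end

theory Submission
  imports Defs
begin


lemma powr_diff_le_aux:
  fixes a b p :: real
  assumes "0 \<le> b" "b \<le> a" "1 \<le> p"
  shows "a powr p - b powr p \<le> p * a powr (p-1) * (a - b)"
proof (cases "b = 0")
  case True
  show ?thesis
  proof (cases "a = 0")
    case True with \<open>b=0\<close> show ?thesis by simp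
  next
    case False
    then have a: "a > 0" using assms by simp
    have "a powr p = a powr (p-1) * a" using a by (simp add: powr_diff)
    also have "\<dots> \<le> p * a powr (p-1) * a" using a assms by (simp add: mult_right_mono)
    finally show ?thesis using True \<open>1 \<le> p\<close> by simp
  qed
next
  case False
  then have b: "b > 0" using assms by simp
  show ?thesis
  proof (cases "b = a")
    case True then show ?thesis by simp
  next
    case False
    then have ba: "b < a" using assms by simp
    have "\<And>x. b \<le> x \<Longrightarrow> x \<le> a \<Longrightarrow> ((\<lambda>z. z powr p) has_real_derivative (\<lambda>x. p * x powr (p - 1)) x) (at x)"
      using b by (auto intro!: has_real_derivative_powr)
    from MVT2[OF ba, of "\<lambda>z. z powr p", OF this] obtain z where z: "b < z" "z < a" "a powr p - b powr p = (a - b) * (p * z powr (p-1))"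
      by auto
    have "z powr (p-1) \<le> a powr (p-1)" using z b assms by (intro powr_mono2) auto
    then have "(a - b) * (p * z powr (p-1)) \<le> (a-b) * (p * a powr (p-1))"
      using ba assms by (intro mult_left_mono) auto
    with z show ?thesis by (simp add: algebra_simps)
  qed
qed

lemma powr_diff_le:
  fixes a b p :: real
  assumes "0 \<le> a" "0 \<le> b" "1 \<le> p"
  shows "\<bar>a powr p - b powr p\<bar> \<le> p * max a b powr (p-1) * \<bar>a - b\<bar>"
proof (cases "b \<le> a")
  case True
  have "b powr p \<le> a powr p" using True assms by (intro powr_mono2) auto
  with powr_diff_le_aux[OF assms(2) True assms(3)] True show ?thesis by (simp add: max_def)
next
  case False
  have "a powr p \<le> b powr p" using False assms by (intro powr_mono2) auto
  with powr_diff_le_aux[OF assms(1) _ assms(3), of b] False show ?thesis by (simp add: max_def)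
qed



lemma powr_le_between:
  fixes m c t :: real
  assumes "0 < c" "c/2 \<le> t" "t \<le> 2*c"
  shows "t powr (m-2) \<le> (2 powr (m-2) + 2 powr (2-m)) * c powr (m-2)"
proof (cases "m \<ge> 2")
  case True
  have "t powr (m-2) \<le> (2*c) powr (m-2)" using assms True by (intro powr_mono2) auto
  also have "\<dots> = 2 powr (m-2) * c powr (m-2)" using assms by (simp add: powr_mult)
  also have "\<dots> \<le> (2 powr (m-2) + 2 powr (2-m)) * c powr (m-2)"
    by (intro mult_right_mono) auto
  finally show ?thesis .
next
  case False
  have "t powr (m-2) \<le> (c/2) powr (m-2)" using assms False by (intro powr_mono2') auto
  also have "\<dots> = 2 powr (2-m) * c powr (m-2)" using assms
  proof -
    have "2 powr (2-m) = 2 powr (-(m-2))" by simp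
    also have "\<dots> = 1 / 2 powr (m-2)" by (rule powr_minus_divide)
    finally show ?thesis using assms by (simp add: powr_divide)
  qed
  also have "\<dots> \<le> (2 powr (m-2) + 2 powr (2-m)) * c powr (m-2)"
    by (intro mult_right_mono) auto
  finally show ?thesis .
qed

lemma taylor2_powr:
  fixes m c x :: real
  assumes "0 < c" "c/2 \<le> x" "x \<le> 2*c" "x \<noteq> c"
  shows "\<exists>t. c/2 \<le> t \<and> t \<le> 2*c \<and>
    x powr m = c powr m + m * c powr (m-1) * (x - c) + m*(m-1)* t powr (m-2) / 2 * (x-c)^2"
proof -
  define diff where "diff = (\<lambda>k::nat. if k = 0 then (\<lambda>t::real. t powr m) else if k = 1 then (\<lambda>t. m * t powr (m-1))
     else (\<lambda>t. m * (m-1) * t powr (m-2)))"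
  have D: "\<forall>k t. k < 2 \<and> c/2 \<le> t \<and> t \<le> 2*c \<longrightarrow> DERIV (diff k) t :> diff (Suc k) t"
  proof (intro allI impI)
    fix k :: nat and t :: real assume kt: "k < 2 \<and> c/2 \<le> t \<and> t \<le> 2*c"
    then have t: "t > 0" using assms by auto
    show "DERIV (diff k) t :> diff (Suc k) t"
    proof (cases "k = 0")
      case True then show ?thesis using t by (simp add: diff_def has_real_derivative_powr)
    next
      case False then have "k = 1" using kt by auto
      then show ?thesis using t unfolding diff_def
        by (auto intro!: derivative_eq_intros simp: algebra_simps diff_diff_eq)
    qed
  qed
  have "c/2 \<le> c" "c \<le> 2*c" using assms by auto
  from Taylor[of 2 diff "\<lambda>t. t powr m", OF _ _ D this assms(2,3,4)]
  obtain t where t: "(if x < c then x < t \<and> t < c else c < t \<and> t < x)"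
    "x powr m = (\<Sum>k<2. diff k c / fact k * (x - c) ^ k) + diff 2 t / fact 2 * (x - c)\<^sup>2"
    by (auto simp: diff_def)
  have "c/2 \<le> t \<and> t \<le> 2*c" using t(1) assms by (auto split: if_splits)
  moreover have "x powr m = c powr m + m * c powr (m-1) * (x - c) + m*(m-1)* t powr (m-2) / 2 * (x-c)^2"
    using t(2) by (simp add: diff_def numeral_2_eq_2)
  ultimately show ?thesis by blast
qed

lemma second_diff_powr:
  fixes m :: real
  assumes "1 \<le> m"
  shows "\<exists>K. \<forall>c e. 0 < c \<longrightarrow> \<bar>e\<bar> \<le> c \<longrightarrow>
     \<bar>(c+e) powr m + (c-e) powr m - 2 * c powr m\<bar> \<le> K * e^2 * c powr (m-2)"
proof -
  define B where "B = 2 powr (m-2) + 2 powr (2-m)"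
  define K where "K = m*(m-1)*B + 16 * 2 powr m"
  have K0: "m*(m-1)*B \<le> K" "16 * 2 powr m \<le> K" using assms by (auto simp: K_def B_def)
  have "\<bar>(c+e) powr m + (c-e) powr m - 2 * c powr m\<bar> \<le> K * e^2 * c powr (m-2)"
    if c: "0 < c" and e: "\<bar>e\<bar> \<le> c" for c e
  proof (cases "e = 0")
    case True then show ?thesis by simp
  next
    case e0: False
    show ?thesis
    proof (cases "\<bar>e\<bar> \<le> c/2")
      case True
      have a1: "c/2 \<le> c+e" "c+e \<le> 2*c" "c+e \<noteq> c" using True e0 c by (auto simp: abs_le_iff)
      have a2: "c/2 \<le> c-e" "c-e \<le> 2*c" "c-e \<noteq> c" using True e0 c by (auto simp: abs_le_iff)
      obtain t1 where t1: "c/2 \<le> t1" "t1 \<le> 2*c"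
        "(c+e) powr m = c powr m + m * c powr (m-1) * e + m*(m-1)* t1 powr (m-2) / 2 * e^2"
        using taylor2_powr[OF c a1, of m] by auto
      obtain t2 where t2: "c/2 \<le> t2" "t2 \<le> 2*c"
        "(c-e) powr m = c powr m - m * c powr (m-1) * e + m*(m-1)* t2 powr (m-2) / 2 * e^2"
        using taylor2_powr[OF c a2, of m] by auto
      have eq: "(c+e) powr m + (c-e) powr m - 2 * c powr m = m*(m-1) * ((t1 powr (m-2) + t2 powr (m-2))/2) * e^2"
        using t1(3) t2(3) by (simp add: algebra_simps add_divide_distrib)
      have mm: "0 \<le> m*(m-1)" using assms by auto
      have "t1 powr (m-2) \<le> B * c powr (m-2)" "t2 powr (m-2) \<le> B * c powr (m-2)"
        using powr_le_between[OF c t1(1,2)] powr_le_between[OF c t2(1,2)] by (auto simp: B_def)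
      then have "(t1 powr (m-2) + t2 powr (m-2))/2 \<le> B * c powr (m-2)" by simp
      then have "m*(m-1) * ((t1 powr (m-2) + t2 powr (m-2))/2) * e^2 \<le> m*(m-1) * (B * c powr (m-2)) * e^2"
        using mm by (intro mult_right_mono mult_left_mono) auto
      also have "\<dots> = (m*(m-1)*B) * (e^2 * c powr (m-2))" by (simp add: algebra_simps)
      also have "\<dots> \<le> K * (e^2 * c powr (m-2))"
        using K0(1) by (intro mult_right_mono) auto
      also have "\<dots> = K * e^2 * c powr (m-2)" by simp
      finally have le: "m*(m-1) * ((t1 powr (m-2) + t2 powr (m-2))/2) * e^2 \<le> K * e^2 * c powr (m-2)" .
      have "0 \<le> m*(m-1) * ((t1 powr (m-2) + t2 powr (m-2))/2) * e^2" using mm by simp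
      then show ?thesis using eq le by (simp only: abs_of_nonneg)
    next
      case False
      have p1: "(c+e) powr m \<le> (2*c) powr m" using c e assms by (intro powr_mono2) auto
      have p2: "(c-e) powr m \<le> (2*c) powr m" using c e assms by (intro powr_mono2) auto
      have p3: "c powr m \<le> (2*c) powr m" using c assms by (intro powr_mono2) auto
      have "\<bar>(c+e) powr m + (c-e) powr m - 2 * c powr m\<bar> \<le> (c+e) powr m + (c-e) powr m + 2 * c powr m"
        using powr_ge_zero[of "c+e" m] powr_ge_zero[of "c-e" m] powr_ge_zero[of c m] by linarith
      also have "\<dots> \<le> 4 * (2*c) powr m" using p1 p2 p3 by simp
      also have "\<dots> = 4 * 2 powr m * (c powr (m-2) * c^2)"
      proof -
        have "c powr (m-2) * c powr 2 = c powr (m - 2 + 2)" by (rule powr_add[symmetric])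
        then have "c powr m = c powr (m-2) * c powr 2" by simp
        also have "c powr 2 = c^2" using c by (simp add: powr_realpow)
        finally have "c powr m = c powr (m-2) * c^2" .
        then show ?thesis using c by (simp add: powr_mult)
      qed
      also have "\<dots> \<le> 4 * 2 powr m * (c powr (m-2) * (4*e^2))"
      proof -
        have "c^2 \<le> (2*\<bar>e\<bar>)^2" using False c by (intro power_mono) auto
        then have "c^2 \<le> 4*e^2" by (simp add: power_mult_distrib)
        then show ?thesis by (intro mult_left_mono) auto
      qed
      also have "\<dots> = (16 * 2 powr m) * e^2 * c powr (m-2)" by simp
      also have "\<dots> \<le> K * e^2 * c powr (m-2)" using K0(2) by (intro mult_right_mono) auto
      finally show ?thesis .
    qed
  qed
  then show ?thesis by blast
qed



lemma frac_id2:
  fixes b c P Q R S :: real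
  assumes "b \<noteq> 0" "c \<noteq> 0" "P*c + Q = R*c + S*b"
  shows "P/b + Q/(b*c) = R/b + S/c"
  using assms by (simp add: field_simps)

lemma frac_id3:
  fixes a b c :: real
  assumes "a \<noteq> 0" "b \<noteq> 0" "c \<noteq> 0"
  shows "1/a - (1/b+1/c)/2 = ((b-a)/b + (c-a)/c)/(2*a)"
  using assms by (simp add: field_simps)

lemma inv_diff_bound:
  fixes A B k W X L :: real
  assumes "0\<le>A" "0\<le>B" "0\<le>k" "0\<le>W" "\<bar>B-A\<bar> \<le> k*W*X" "X \<le> L*(1+B)"
  shows "\<bar>1/(1+A) - 1/(1+B)\<bar> \<le> k*W*L/(1+A)"
proof -
  have eq: "1/(1+A) - 1/(1+B) = ((B-A)/(1+B))/(1+A)" using assms by (simp add: field_simps)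
  have "\<bar>B-A\<bar>/(1+B) \<le> k*W*X/(1+B)" using assms by (intro divide_right_mono) auto
  also have "\<dots> \<le> k*W*(L*(1+B))/(1+B)" using assms
    by (intro divide_right_mono mult_left_mono) auto
  also have "\<dots> = k*W*L" using assms by simp
  finally have "\<bar>(B-A)/(1+B)\<bar> \<le> k*W*L" using assms by simp
  then have "\<bar>(B-A)/(1+B)\<bar>/(1+A) \<le> k*W*L/(1+A)" using assms by (intro divide_right_mono) auto
  moreover have "\<bar>((B-A)/(1+B))/(1+A)\<bar> = \<bar>(B-A)/(1+B)\<bar>/(1+A)"
  proof -
    have "\<bar>1+A\<bar> = 1+A" using assms by simp
    then show ?thesis by (simp only: abs_divide)
  qed
  ultimately show ?thesis unfolding eq by linarith
qed

lemma near1_alg: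
  fixes A B C k W X L :: real
  assumes "0\<le>A" "0\<le>B" "0\<le>C" "0\<le>k" "0\<le>W"
    "\<bar>B-A\<bar> \<le> k*W*X" "\<bar>C-A\<bar> \<le> k*W*X" "X \<le> L*(1+B)" "X \<le> L*(1+C)"
  shows "\<bar>1/(1+A) - (1/(1+B)+1/(1+C))/2\<bar> \<le> k*L*W/(1+A)"
proof -
  have 1: "\<bar>1/(1+A) - 1/(1+B)\<bar> \<le> k*W*L/(1+A)" by (rule inv_diff_bound) (use assms in auto)
  have 2: "\<bar>1/(1+A) - 1/(1+C)\<bar> \<le> k*W*L/(1+A)" by (rule inv_diff_bound) (use assms in auto)
  have "1/(1+A) - (1/(1+B)+1/(1+C))/2 = ((1/(1+A) - 1/(1+B)) + (1/(1+A) - 1/(1+C)))/2"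
  proof -
    have "\<And>a b c::real. a - (b+c)/2 = ((a-b)+(a-c))/2" by (simp add: field_simps)
    then show ?thesis by blast
  qed
  then have "\<bar>1/(1+A) - (1/(1+B)+1/(1+C))/2\<bar> \<le> (\<bar>1/(1+A) - 1/(1+B)\<bar> + \<bar>1/(1+A) - 1/(1+C)\<bar>)/2"
  proof -
    have "\<And>x y z::real. x = (y+z)/2 \<Longrightarrow> \<bar>x\<bar> \<le> (\<bar>y\<bar>+\<bar>z\<bar>)/2" by (simp add: abs_if)
    then show ?thesis using \<open>1/(1+A) - (1/(1+B)+1/(1+C))/2 = ((1/(1+A) - 1/(1+B)) + (1/(1+A) - 1/(1+C)))/2\<close> by blast
  qed
  also have "\<dots> \<le> (k*W*L/(1+A) + k*W*L/(1+A))/2" using 1 2 by (intro divide_right_mono add_mono) auto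
  also have "\<dots> = k*W*L/(1+A)" by (simp only: add_divide_distrib field_sum_of_halves)
  finally show ?thesis by (simp add: algebra_simps)
qed

lemma near2_alg:
  fixes A B C k K W X Y L :: real
  assumes "0\<le>A" "0\<le>B" "0\<le>C" "0\<le>k" "0\<le>K" "0\<le>W" "0 \<le> L" "0 \<le> Y"
    "\<bar>B+C-2*A\<bar> \<le> K*W^2*Y" "\<bar>C-A\<bar> \<le> k*W*X" "\<bar>B-C\<bar> \<le> 2*k*W*X"
    "X \<le> L*(1+B)" "X \<le> L*(1+C)" "Y \<le> X"
  shows "\<bar>1/(1+A) - (1/(1+B)+1/(1+C))/2\<bar> \<le> ((K*L + 2*k^2*L^2)/2) * W^2/(1+A)"
proof -
  have eq: "1/(1+A) - (1/(1+B)+1/(1+C))/2 =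
     ((B+C-2*A)/(1+B) + ((C-A)*(B-C))/((1+B)*(1+C))) / (2*(1+A))"
  proof -
    have nz: "1+A \<noteq> 0" "1+B \<noteq> 0" "1+C \<noteq> 0" using assms by auto
    have "(B+C-2*A)/(1+B) + ((C-A)*(B-C))/((1+B)*(1+C)) = ((1+B)-(1+A))/(1+B) + ((1+C)-(1+A))/(1+C)"
      by (rule frac_id2) (use assms in \<open>auto simp: algebra_simps\<close>)
    then show ?thesis using frac_id3[OF nz] by simp
  qed
  have X0: "0 \<le> X" using assms by linarith
  have t1: "\<bar>(B+C-2*A)/(1+B)\<bar> \<le> K*W^2*L"
  proof -
    have "\<bar>(B+C-2*A)/(1+B)\<bar> = \<bar>B+C-2*A\<bar>/(1+B)" using assms by simp
    also have "\<dots> \<le> K*W^2*Y/(1+B)" using assms by (intro divide_right_mono) auto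
    also have "\<dots> \<le> K*W^2*(L*(1+B))/(1+B)" using assms
      by (intro divide_right_mono mult_left_mono) auto
    also have "\<dots> = K*W^2*L" using assms by simp
    finally show ?thesis .
  qed
  have t2: "\<bar>((C-A)*(B-C))/((1+B)*(1+C))\<bar> \<le> 2*k^2*W^2*L^2"
  proof -
    have "\<bar>((C-A)*(B-C))/((1+B)*(1+C))\<bar> = (\<bar>C-A\<bar>/(1+C)) * (\<bar>B-C\<bar>/(1+B))"
      using assms by (simp add: abs_mult)
    also have "\<dots> \<le> (k*W*L) * (2*k*W*L)"
    proof (intro mult_mono)
      have "\<bar>C-A\<bar>/(1+C) \<le> k*W*X/(1+C)" using assms by (intro divide_right_mono) auto
      also have "\<dots> \<le> k*W*(L*(1+C))/(1+C)" using assms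
        by (intro divide_right_mono mult_left_mono) auto
      finally show "\<bar>C-A\<bar>/(1+C) \<le> k*W*L" using assms by simp
      have "\<bar>B-C\<bar>/(1+B) \<le> 2*k*W*X/(1+B)" using assms by (intro divide_right_mono) auto
      also have "\<dots> \<le> 2*k*W*(L*(1+B))/(1+B)" using assms
        by (intro divide_right_mono mult_left_mono) auto
      finally show "\<bar>B-C\<bar>/(1+B) \<le> 2*k*W*L" using assms by simp
    qed (use assms in auto)
    also have "\<dots> = 2*k^2*W^2*L^2" by (simp add: power2_eq_square)
    finally show ?thesis .
  qed
  have "\<bar>(B+C-2*A)/(1+B) + ((C-A)*(B-C))/((1+B)*(1+C))\<bar> \<le> K*W^2*L + 2*k^2*W^2*L^2"
    using t1 t2 by linarith
  then have "\<bar>1/(1+A) - (1/(1+B)+1/(1+C))/2\<bar> \<le> (K*W^2*L + 2*k^2*W^2*L^2) / (2*(1+A))"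
    unfolding eq using assms by (simp add: divide_right_mono)
  also have "\<dots> = ((K*L + 2*k^2*L^2)/2) * W^2/(1+A)" by (simp add: field_simps)
  finally show ?thesis .
qed



definition gq :: "real \<Rightarrow> 'a::real_normed_vector \<Rightarrow> real" where
  "gq p u = 1 / (1 + norm u powr p)"

definition TT :: "real \<Rightarrow> 'a::real_normed_vector \<Rightarrow> 'a \<Rightarrow> real" where
  "TT p z w = gq p z - (gq p (z+w) + gq p (z-w))/2"

lemma one_plus_powr_le:
  fixes x p :: real assumes "0 \<le> x" "0 \<le> p"
  shows "(1+x) powr p \<le> 2 powr p * (1 + x powr p)"
proof -
  have "(1+x) powr p \<le> (2 * max 1 x) powr p" using assms by (intro powr_mono2) auto
  also have "\<dots> = 2 powr p * max 1 x powr p" using assms by (simp add: powr_mult)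
  also have "max 1 x powr p \<le> 1 + x powr p"
    using assms by (auto simp: max_def)
  finally show ?thesis by (simp add: mult_left_mono)
qed

lemma qdiff_bound:
  fixes z w v :: "'a::real_normed_vector" and p :: real
  assumes "1 \<le> p" "norm v \<le> 1 + norm z" "norm w \<le> 1 + norm z"
  shows "\<bar>norm v powr p - norm w powr p\<bar> \<le> p * norm (v - w) * (1 + norm z) powr (p-1)"
proof -
  have "\<bar>norm v powr p - norm w powr p\<bar> \<le> p * max (norm v) (norm w) powr (p-1) * \<bar>norm v - norm w\<bar>"
    using assms by (intro powr_diff_le) auto
  also have "\<dots> \<le> p * (1 + norm z) powr (p-1) * norm (v - w)"
  proof -
    have a: "max (norm v) (norm w) powr (p - 1) \<le> (1 + norm z) powr (p - 1)"
      using assms by (intro powr_mono2) (auto simp: le_max_iff_disj)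
    have b: "\<bar>norm v - norm w\<bar> \<le> norm (v - w)" by (rule norm_triangle_ineq3)
    show ?thesis using assms by (intro mult_mono mult_left_mono a b) auto
  qed
  finally show ?thesis by (simp add: algebra_simps)
qed

lemma lower_bound_near:
  fixes z w :: "'a::real_normed_vector" and p :: real
  assumes "1 \<le> p" "norm w \<le> 1"
  shows "(1 + norm z) powr (p-1) \<le> 4 powr p * (1 + norm (z+w) powr p)"
proof -
  have R: "1 \<le> 1 + norm z" by simp
  have "(1 + norm z) powr (p-1) \<le> (1 + norm z) powr p" using R by (intro powr_mono) auto
  also have "\<dots> \<le> (2 * (1 + norm (z+w))) powr p"
  proof (intro powr_mono2)
    have "norm z \<le> norm (z+w) + norm w" using norm_triangle_ineq4[of "z+w" w] by simp
    then show "1 + norm z \<le> 2 * (1 + norm (z + w))" using assms norm_ge_zero[of "z+w"] by (smt (verit))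
  qed (use assms in auto)
  also have "\<dots> = 2 powr p * (1 + norm (z+w)) powr p" using powr_mult[of 2 "1+norm(z+w)" p] by simp
  also have "\<dots> \<le> 2 powr p * (2 powr p * (1 + norm (z+w) powr p))"
    using assms by (intro mult_left_mono one_plus_powr_le) auto
  also have "\<dots> = 4 powr p * (1 + norm (z+w) powr p)"
  proof -
    have "(2::real) powr p * 2 powr p = 4 powr p" by (simp add: powr_mult[symmetric])
    then show ?thesis by simp
  qed
  finally show ?thesis .
qed

lemma TT_near1:
  fixes z w :: "'a::real_normed_vector" and p :: real
  assumes "1 \<le> p" "norm w \<le> 1"
  shows "\<bar>TT p z w\<bar> \<le> p * 4 powr p * norm w * gq p z"
proof -
  define A where "A = norm z powr p"
  define B where "B = norm (z+w) powr p"
  define C where "C = norm (z-w) powr p"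
  define X where "X = (1 + norm z) powr (p-1)"
  have nb: "norm (z+w) \<le> 1 + norm z" "norm (z-w) \<le> 1 + norm z"
    using assms norm_triangle_ineq[of z w] norm_triangle_ineq4[of z w] by auto
  have 1: "\<bar>B-A\<bar> \<le> p*norm w*X"
    using qdiff_bound[OF assms(1) nb(1), of z] unfolding A_def B_def X_def by simp
  have 2: "\<bar>C-A\<bar> \<le> p*norm w*X"
    using qdiff_bound[OF assms(1) nb(2), of z] unfolding A_def C_def X_def by simp
  have 3: "X \<le> 4 powr p * (1+B)" unfolding X_def B_def by (rule lower_bound_near) (use assms in auto)
  have 4: "X \<le> 4 powr p * (1+C)" unfolding X_def C_def
    using lower_bound_near[OF assms(1), of "-w" z] assms by simp
  have "\<bar>1/(1+A) - (1/(1+B)+1/(1+C))/2\<bar> \<le> p * 4 powr p * norm w/(1+A)"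
    by (rule near1_alg[OF _ _ _ _ _ 1 2 3 4]) (use assms in \<open>auto simp: A_def B_def C_def\<close>)
  then show ?thesis by (simp add: TT_def gq_def A_def B_def C_def)
qed



lemma sq_powr:
  fixes x b :: real assumes "0 < x"
  shows "(x^2) powr b = x powr (2*b)"
proof -
  have "x^2 = x powr 2" using assms by (simp add: powr_realpow)
  then show ?thesis by (simp add: powr_powr)
qed

lemma sq_powr0:
  fixes x p :: real assumes "0 \<le> x" "0 < p"
  shows "x powr p = (x^2) powr (p/2)"
proof (cases "x = 0")
  case True then show ?thesis using assms by simp
next
  case False then show ?thesis using assms sq_powr[of x "p/2"] by simp
qed

lemma q_second_diff:
  fixes p :: real
  assumes "2 \<le> p"
  shows "\<exists>K\<ge>0. \<forall>z w::'a::real_inner. norm w \<le> 1 \<longrightarrow>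
    \<bar>norm (z+w) powr p + norm (z-w) powr p - 2 * norm z powr p\<bar> \<le> K * norm w^2 * (1 + norm z) powr (p-2)"
proof -
  define m where "m = p/2"
  have m1: "1 \<le> m" using assms by (simp add: m_def)
  obtain K0 where K0: "\<And>c e. 0 < c \<Longrightarrow> \<bar>e\<bar> \<le> c \<Longrightarrow>
     \<bar>(c+e) powr m + (c-e) powr m - 2 * c powr m\<bar> \<le> K0 * e^2 * c powr (m-2)"
    using second_diff_powr[OF m1] by blast
  define K where "K = 4*\<bar>K0\<bar> + 2*m"
  have "\<bar>norm (z+w) powr p + norm (z-w) powr p - 2 * norm z powr p\<bar> \<le> K * norm w^2 * (1 + norm z) powr (p-2)"
    if w1: "norm w \<le> 1" for z w :: 'a
  proof -
    define c where "c = norm z^2 + norm w^2"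
    define v where "v = norm w^2"
    define e where "e = 2 * (z \<bullet> w)"
    have p0: "0 < p" using assms by simp
    have eq1: "norm (z+w)^2 = c + e" unfolding c_def e_def by (simp add: dot_norm field_simps)
    have eq2: "norm (z-w)^2 = c - e" unfolding c_def e_def by (simp add: dot_norm_neg field_simps)
    have eq3: "norm z^2 = c - v" unfolding c_def v_def by simp
    have A: "norm (z+w) powr p = (c+e) powr m" using sq_powr0[of "norm (z+w)" p] p0 eq1 by (simp add: m_def)
    have B: "norm (z-w) powr p = (c-e) powr m" using sq_powr0[of "norm (z-w)" p] p0 eq2 by (simp add: m_def)
    have C: "norm z powr p = (c-v) powr m" using sq_powr0[of "norm z" p] p0 eq3 by (simp add: m_def)
    have v0: "0 \<le> v" by (simp add: v_def)
    have cv: "v \<le> c" by (simp add: v_def c_def)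
    have K0': "0 \<le> K" using m1 by (simp add: K_def)
    show ?thesis
    proof (cases "c = 0")
      case True
      then have "norm z = 0" "norm w = 0" unfolding c_def by (auto simp: add_nonneg_eq_0_iff)
      then show ?thesis using p0 by simp
    next
      case False
      then have c0: "0 < c" unfolding c_def by (simp add: add_pos_nonneg order_le_neq_trans)
      have ez: "e^2 \<le> 4 * (c-v) * v"
      proof -
        have "\<bar>z \<bullet> w\<bar> \<le> norm z * norm w" by (rule Cauchy_Schwarz_ineq2)
        then have "(z \<bullet> w)^2 \<le> (norm z * norm w)^2"
          by (metis abs_ge_zero power_mono power2_abs)
        then show ?thesis unfolding e_def v_def c_def by (simp add: power_mult_distrib algebra_simps)
      qed
      have ec: "\<bar>e\<bar> \<le> c"
      proof -
        have "\<bar>z \<bullet> w\<bar> \<le> norm z * norm w" by (rule Cauchy_Schwarz_ineq2)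
        moreover have "2 * (norm z * norm w) \<le> norm z^2 + norm w^2"
          using sum_squares_bound[of "norm z" "norm w"] by (simp add: algebra_simps power2_eq_square)
        ultimately show ?thesis unfolding e_def c_def by simp
      qed
      have t1: "\<bar>(c+e) powr m + (c-e) powr m - 2 * c powr m\<bar> \<le> 4*\<bar>K0\<bar> * v * c powr (m-1)"
      proof -
        have "\<bar>(c+e) powr m + (c-e) powr m - 2 * c powr m\<bar> \<le> K0 * e^2 * c powr (m-2)" by (rule K0[OF c0 ec])
        also have "\<dots> \<le> \<bar>K0\<bar> * (4 * c * v) * c powr (m-2)"
        proof (intro mult_right_mono)
          have "4 * (c - v) * v = 4 * c * v - 4 * (v * v)" by (simp add: algebra_simps)
          moreover have "0 \<le> v * v" using v0 by simp
          ultimately have e4: "e^2 \<le> 4 * c * v" using ez by linarith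
          have "K0 * e^2 \<le> \<bar>K0\<bar> * e^2" by (intro mult_right_mono) auto
          also have "\<dots> \<le> \<bar>K0\<bar> * (4 * c * v)" using e4 by (intro mult_left_mono) auto
          finally show "K0 * e^2 \<le> \<bar>K0\<bar> * (4 * c * v)" .
        qed simp
        also have "\<dots> = 4*\<bar>K0\<bar> * v * (c * c powr (m-2))" by (simp add: algebra_simps)
        also have "c * c powr (m-2) = c powr (m-1)"
        proof -
          have "c powr 1 * c powr (m-2) = c powr (1 + (m-2))" by (rule powr_add[symmetric])
          then show ?thesis using c0 by simp
        qed
        finally show ?thesis .
      qed
      have t2: "\<bar>c powr m - (c-v) powr m\<bar> \<le> m * v * c powr (m-1)"
      proof -
        have "\<bar>c powr m - (c-v) powr m\<bar> \<le> m * max c (c-v) powr (m-1) * \<bar>c - (c-v)\<bar>"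
          using cv v0 c0 m1 by (intro powr_diff_le) auto
        also have "max c (c-v) = c" using v0 by simp
        finally show ?thesis using v0 by (simp add: algebra_simps)
      qed
      have "\<bar>norm (z+w) powr p + norm (z-w) powr p - 2 * norm z powr p\<bar>
         = \<bar>((c+e) powr m + (c-e) powr m - 2 * c powr m) + 2 * (c powr m - (c-v) powr m)\<bar>"
        unfolding A B C by (simp add: algebra_simps)
      also have "\<dots> \<le> 4*\<bar>K0\<bar> * v * c powr (m-1) + 2 * (m * v * c powr (m-1))"
      proof -
        have "\<bar>((c+e) powr m + (c-e) powr m - 2 * c powr m) + 2 * (c powr m - (c-v) powr m)\<bar>
          \<le> \<bar>(c+e) powr m + (c-e) powr m - 2 * c powr m\<bar> + \<bar>2 * (c powr m - (c-v) powr m)\<bar>"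
          by (rule abs_triangle_ineq)
        also have "\<bar>2 * (c powr m - (c-v) powr m)\<bar> = 2 * \<bar>c powr m - (c-v) powr m\<bar>" by (simp only: abs_mult abs_numeral)
        finally show ?thesis using t1 t2 by (elim order_trans) (intro add_mono mult_left_mono, auto)
      qed
      also have "\<dots> = K * v * c powr (m-1)" by (simp add: K_def algebra_simps)
      also have "\<dots> \<le> K * v * (1 + norm z) powr (p-2)"
      proof (intro mult_left_mono)
        have "norm w^2 \<le> 1" using w1 by (simp add: power_le_one)
        then have "c \<le> norm z^2 + 1" unfolding c_def by simp
        also have "\<dots> \<le> (1 + norm z)^2" unfolding power2_sum by simp
        finally have "c \<le> (1 + norm z)^2" .
        then have "c powr (m-1) \<le> ((1 + norm z)^2) powr (m-1)" using c0 m1 by (intro powr_mono2) auto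
        also have "\<dots> = (1 + norm z) powr (p-2)"
          by (subst sq_powr) (auto simp: m_def algebra_simps intro: add_pos_nonneg)
        finally show "c powr (m-1) \<le> (1 + norm z) powr (p-2)" .
      qed (use K0' v0 in auto)
      finally show ?thesis by (simp add: v_def)
    qed
  qed
  moreover have "0 \<le> K" using m1 by (simp add: K_def)
  ultimately show ?thesis by blast
qed



lemma TT_near2:
  fixes p :: real
  assumes "2 \<le> p"
  shows "\<exists>M\<ge>0. \<forall>z w::'a::real_inner. norm w \<le> 1 \<longrightarrow> \<bar>TT p z w\<bar> \<le> M * norm w^2 * gq p z"
proof -
  obtain K where K: "K \<ge> 0" "\<And>z w::'a. norm w \<le> 1 \<Longrightarrow>
    \<bar>norm (z+w) powr p + norm (z-w) powr p - 2 * norm z powr p\<bar> \<le> K * norm w^2 * (1 + norm z) powr (p-2)"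
    using q_second_diff[OF assms] by blast
  have p1: "1 \<le> p" using assms by simp
  define M where "M = (K * 4 powr p + 2 * p^2 * (4 powr p)^2) / 2"
  have "\<bar>TT p z w\<bar> \<le> M * norm w^2 * gq p z" if w1: "norm w \<le> 1" for z w :: 'a
  proof -
    define A where "A = norm z powr p"
    define B where "B = norm (z+w) powr p"
    define C where "C = norm (z-w) powr p"
    define X where "X = (1 + norm z) powr (p-1)"
    define Y where "Y = (1 + norm z) powr (p-2)"
    have nb: "norm (z+w) \<le> 1 + norm z" "norm (z-w) \<le> 1 + norm z"
      using w1 norm_triangle_ineq[of z w] norm_triangle_ineq4[of z w] by auto
    have 0: "\<bar>B+C-2*A\<bar> \<le> K*norm w^2*Y" using K(2)[OF w1, of z] unfolding A_def B_def C_def Y_def by simp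
    have 2: "\<bar>C-A\<bar> \<le> p*norm w*X"
      using qdiff_bound[OF p1 nb(2), of z] unfolding A_def C_def X_def by simp
    have 1: "\<bar>B-C\<bar> \<le> 2*p*norm w*X"
    proof -
      have "\<bar>B-C\<bar> \<le> p * norm ((z+w) - (z-w)) * X"
        using qdiff_bound[OF p1 nb(1) nb(2)] unfolding B_def C_def X_def by simp
      also have "norm ((z+w) - (z-w)) = 2 * norm w"
      proof -
        have "(z+w) - (z-w) = 2 *\<^sub>R w" by (simp add: algebra_simps scaleR_2)
        then show ?thesis by simp
      qed
      finally show ?thesis by (simp add: algebra_simps)
    qed
    have 3: "X \<le> 4 powr p * (1+B)" unfolding X_def B_def by (rule lower_bound_near) (use assms w1 in auto)
    have 4: "X \<le> 4 powr p * (1+C)" unfolding X_def C_def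
      using lower_bound_near[OF p1, of "-w" z] w1 by simp
    have 5: "Y \<le> X" unfolding X_def Y_def by (intro powr_mono) auto
    have "\<bar>1/(1+A) - (1/(1+B)+1/(1+C))/2\<bar> \<le> ((K*4 powr p + 2*p^2*(4 powr p)^2)/2) * norm w^2/(1+A)"
      by (rule near2_alg[OF _ _ _ _ _ _ _ _ 0 2 1 3 4 5]) (use assms K(1) in \<open>auto simp: A_def B_def C_def Y_def\<close>)
    then show ?thesis by (simp add: TT_def gq_def A_def B_def C_def M_def)
  qed
  moreover have "M \<ge> 0" using K(1) assms by (simp add: M_def)
  ultimately show ?thesis by blast
qed

lemma far_alg:
  fixes a b W P :: real
  assumes "0\<le>a" "0\<le>b" "0<W" "0\<le>P" "a \<le> P*(b+W)"
  shows "(1/(1+b)) * (1/W) \<le> (1+P) * (1/(1+a)) * (1/W + 1/(1+b))"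
proof -
  have "(1/(1+b)) * (1/W) * (1+a) \<le> (1/(1+b)) * (1/W) * (1 + P*(b+W))"
    using assms by (intro mult_left_mono) auto
  also have "\<dots> = 1/((1+b)*W) + P*(b/(1+b))*(1/W) + P/(1+b)"
  proof -
    have "\<And>x. x \<noteq> 0 \<Longrightarrow> (1/x)*(1/W)*(1+P*(b+W)) = 1/(x*W) + P*(b/x)*(1/W) + P/x"
      using assms by (simp add: field_simps)
    moreover have "1 + b \<noteq> 0" using assms by simp
    ultimately show ?thesis by blast
  qed
  also have "\<dots> \<le> 1/W + P*1*(1/W) + P/(1+b)"
  proof -
    have "1/((1+b)*W) \<le> 1/W"
      by (rule divide_left_mono) (use assms in \<open>auto simp: mult_pos_pos add_pos_nonneg\<close>)
    moreover have "P*(b/(1+b))*(1/W) \<le> P*1*(1/W)" using assms by (intro mult_mono mult_left_mono) auto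
    ultimately show ?thesis by linarith
  qed
  also have "\<dots> \<le> (1+P) * (1/W + 1/(1+b))"
  proof -
    have "(1+P) * (1/W + 1/(1+b)) = 1/W + P*(1/W) + 1/(1+b) + P/(1+b)" by (simp add: algebra_simps add_divide_distrib)
    moreover have "0 \<le> 1/(1+b)" using assms by simp
    ultimately show ?thesis by simp
  qed
  finally have *: "(1/(1+b)) * (1/W) * (1+a) \<le> (1+P) * (1/W + 1/(1+b))" .
  have "(1/(1+b)) * (1/W) = ((1/(1+b)) * (1/W) * (1+a)) * (1/(1+a))" using assms by simp
  also have "\<dots> \<le> ((1+P) * (1/W + 1/(1+b))) * (1/(1+a))"
    using * assms by (intro mult_right_mono) auto
  finally show ?thesis by (simp add: algebra_simps)
qed

lemma powr_sum_le:
  fixes a b p :: real assumes "0\<le>a" "0\<le>b" "0\<le>p"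
  shows "(a+b) powr p \<le> 2 powr p * (a powr p + b powr p)"
proof -
  have "(a+b) powr p \<le> (2 * max a b) powr p" using assms by (intro powr_mono2) auto
  also have "\<dots> = 2 powr p * max a b powr p" using assms powr_mult[of 2 "max a b" p] by simp
  also have "max a b powr p \<le> a powr p + b powr p" by (auto simp: max_def)
  finally show ?thesis by (simp add: mult_left_mono)
qed

lemma gq_pos: "0 < gq p u" "gq p u \<le> 1"
  unfolding gq_def by (auto simp: add_pos_nonneg)

lemma gq_far_one:
  fixes z u w :: "'a::real_normed_vector" and p :: real
  assumes "0 < p" "w \<noteq> 0" "norm z \<le> norm u + norm w"
  shows "gq p u * norm w powr (-p) \<le> (1 + 2 powr p) * gq p z * (norm w powr (-p) + gq p u)"
proof -
  have a: "norm z powr p \<le> 2 powr p * (norm u powr p + norm w powr p)"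
  proof -
    have "norm z powr p \<le> (norm u + norm w) powr p" using assms by (intro powr_mono2) auto
    also have "\<dots> \<le> 2 powr p * (norm u powr p + norm w powr p)" using assms by (intro powr_sum_le) auto
    finally show ?thesis .
  qed
  have W: "0 < norm w powr p" using assms by simp
  have eq: "norm w powr (-p) = 1 / norm w powr p" by (rule powr_minus_divide)
  show ?thesis unfolding eq gq_def
    using far_alg[of "norm z powr p" "norm u powr p" "norm w powr p" "2 powr p"] a W
    by (simp add: algebra_simps)
qed

lemma TT_far:
  fixes z w :: "'a::real_normed_vector" and p :: real
  assumes "0 < p" "w \<noteq> 0"
  shows "\<bar>TT p z w\<bar> * norm w powr (-p) \<le> (2 + 2 powr p) * gq p z * (norm w powr (-p) + gq p (z+w) + gq p (z-w))"
proof -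
  have t: "\<bar>TT p z w\<bar> \<le> gq p z + gq p (z+w)/2 + gq p (z-w)/2"
  proof -
    have "\<And>a b c::real. 0<a \<Longrightarrow> 0<b \<Longrightarrow> 0<c \<Longrightarrow> \<bar>a - (b+c)/2\<bar> \<le> a + b/2 + c/2"
      by (simp add: abs_le_iff field_simps)
    then show ?thesis unfolding TT_def using gq_pos[of p z] gq_pos[of p "z+w"] gq_pos[of p "z-w"] by blast
  qed
  have n1: "norm z \<le> norm (z+w) + norm w" using norm_triangle_ineq4[of "z+w" w] by simp
  have n2: "norm z \<le> norm (z-w) + norm w" using norm_triangle_ineq[of "z-w" w] by simp
  have f1: "gq p (z+w) * norm w powr (-p) \<le> (1 + 2 powr p) * gq p z * (norm w powr (-p) + gq p (z+w))"
    by (rule gq_far_one[OF assms n1])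
  have f2: "gq p (z-w) * norm w powr (-p) \<le> (1 + 2 powr p) * gq p z * (norm w powr (-p) + gq p (z-w))"
    by (rule gq_far_one[OF assms n2])
  define s where "s = norm w powr (-p)"
  define G where "G = gq p z"
  define G1 where "G1 = gq p (z+w)"
  define G2 where "G2 = gq p (z-w)"
  define P where "P = 2 powr p"
  have s0: "0 \<le> s" by (simp add: s_def)
  have G0: "0 \<le> G" "0 \<le> G1" "0 \<le> G2" unfolding G_def G1_def G2_def by (auto intro: less_imp_le[OF gq_pos(1)])
  have P0: "0 \<le> P" by (simp add: P_def)
  have "\<bar>TT p z w\<bar> * s \<le> (G + G1/2 + G2/2) * s" using t s0 by (intro mult_right_mono) (auto simp: G_def G1_def G2_def)
  also have "\<dots> = G* s + (G1* s)/2 + (G2* s)/2" by (simp add: algebra_simps)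
  also have "\<dots> \<le> G* s + ((1+P)*G*(s+G1))/2 + ((1+P)*G*(s+G2))/2"
    using f1 f2 unfolding s_def G_def G1_def G2_def P_def by (intro add_mono divide_right_mono) auto
  also have "\<dots> \<le> (2 + P) * G * (s + G1 + G2)"
  proof -
    have "G* s + ((1+P)*G*(s+G1))/2 + ((1+P)*G*(s+G2))/2 = (2+P)*G* s + ((1+P)/2)*G*G1 + ((1+P)/2)*G*G2"
      by (simp add: algebra_simps add_divide_distrib)
    also have "\<dots> \<le> (2+P)*G* s + (2+P)*G*G1 + (2+P)*G*G2"
      using G0 P0 s0 by (intro add_mono mult_right_mono) auto
    also have "\<dots> = (2 + P) * G * (s + G1 + G2)" by (simp add: algebra_simps)
    finally show ?thesis .
  qed
  finally show ?thesis unfolding s_def G_def G1_def G2_def P_def .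
qed



lemma TT_bound:
  fixes \<alpha> d :: real
  assumes "0 < \<alpha>" "\<alpha> < 2" "1 \<le> d"
  shows "\<exists>M\<ge>0. \<exists>\<beta>. \<alpha> < \<beta> \<and> \<beta> \<le> d + \<alpha> \<and> (\<forall>z w::'a::real_inner. w \<noteq> 0 \<longrightarrow>
     \<bar>TT (d+\<alpha>) z w\<bar> * norm w powr (-(d+\<alpha>)) \<le> M * gq (d+\<alpha>) z *
       ((if norm w \<le> 1 then norm w powr (\<beta> - (d+\<alpha>)) else norm w powr (-(d+\<alpha>)))
        + gq (d+\<alpha>) (z+w) + gq (d+\<alpha>) (z-w)))"
proof -
  define p where "p = d + \<alpha>"
  have p1: "1 \<le> p" "0 < p" using assms by (auto simp: p_def)
  define Mf where "Mf = 2 + 2 powr p"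
  have Mf0: "0 \<le> Mf" by (simp add: Mf_def)
  have key: "\<exists>M\<ge>0. \<exists>\<beta>. \<alpha> < \<beta> \<and> \<beta> \<le> p \<and> (\<forall>z w::'a. w \<noteq> 0 \<longrightarrow> norm w \<le> 1 \<longrightarrow>
     \<bar>TT p z w\<bar> * norm w powr (-p) \<le> M * gq p z * norm w powr (\<beta> - p))"
  proof (cases "\<alpha> < 1")
    case True
    define M where "M = p * 4 powr p"
    have "\<bar>TT p z w\<bar> * norm w powr (-p) \<le> M * gq p z * norm w powr (1 - p)"
      if "w \<noteq> 0" "norm w \<le> 1" for z w :: 'a
    proof -
      have "\<bar>TT p z w\<bar> * norm w powr (-p) \<le> (p * 4 powr p * norm w * gq p z) * norm w powr (-p)"
        using TT_near1[OF p1(1) that(2), of z] by (intro mult_right_mono) auto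
      also have "\<dots> = M * gq p z * (norm w powr 1 * norm w powr (-p))"
        using that by (simp add: M_def)
      also have "norm w powr 1 * norm w powr (-p) = norm w powr (1 - p)"
      proof -
        have "norm w powr 1 * norm w powr (-p) = norm w powr (1 + (-p))" by (rule powr_add[symmetric])
        then show ?thesis by simp
      qed
      finally show ?thesis .
    qed
    moreover have "0 \<le> M" using p1 by (simp add: M_def)
    moreover have "1 \<le> p" by (rule p1)
    ultimately show ?thesis using True by blast
  next
    case False
    then have p2: "2 \<le> p" using assms by (simp add: p_def)
    obtain M where M: "M \<ge> 0" "\<And>z w::'a. norm w \<le> 1 \<Longrightarrow> \<bar>TT p z w\<bar> \<le> M * norm w^2 * gq p z"
      using TT_near2[OF p2] by blast
    have "\<bar>TT p z w\<bar> * norm w powr (-p) \<le> M * gq p z * norm w powr (2 - p)"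
      if "w \<noteq> 0" "norm w \<le> 1" for z w :: 'a
    proof -
      have "\<bar>TT p z w\<bar> * norm w powr (-p) \<le> (M * norm w^2 * gq p z) * norm w powr (-p)"
        using M(2)[OF that(2), of z] by (intro mult_right_mono) auto
      also have "\<dots> = M * gq p z * (norm w powr 2 * norm w powr (-p))"
        using that by (simp add: powr_realpow)
      also have "norm w powr 2 * norm w powr (-p) = norm w powr (2 - p)"
      proof -
        have "norm w powr 2 * norm w powr (-p) = norm w powr (2 + (-p))" by (rule powr_add[symmetric])
        then show ?thesis by simp
      qed
      finally show ?thesis .
    qed
    then show ?thesis using M(1) p2 assms by (intro exI[of _ M]) (auto intro!: exI[of _ 2])
  qed
  then obtain M \<beta> where M: "M \<ge> 0" "\<alpha> < \<beta>" "\<beta> \<le> p" "\<And>z w::'a. w \<noteq> 0 \<Longrightarrow> norm w \<le> 1 \<Longrightarrow>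
     \<bar>TT p z w\<bar> * norm w powr (-p) \<le> M * gq p z * norm w powr (\<beta> - p)" by blast
  define M' where "M' = max M Mf"
  have "\<bar>TT p z w\<bar> * norm w powr (-p) \<le> M' * gq p z *
       ((if norm w \<le> 1 then norm w powr (\<beta> - p) else norm w powr (-p)) + gq p (z+w) + gq p (z-w))"
    if w0: "w \<noteq> 0" for z w :: 'a
  proof -
    have g: "0 \<le> gq p z" "0 \<le> gq p (z+w)" "0 \<le> gq p (z-w)" by (auto intro: less_imp_le[OF gq_pos(1)])
    show ?thesis
    proof (cases "norm w \<le> 1")
      case True
      have "\<bar>TT p z w\<bar> * norm w powr (-p) \<le> M * gq p z * norm w powr (\<beta> - p)" by (rule M(4)[OF w0 True])
      also have "\<dots> \<le> M' * gq p z * (norm w powr (\<beta> - p) + gq p (z+w) + gq p (z-w))"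
        using g M(1) by (intro mult_mono) (auto simp: M'_def)
      finally show ?thesis using True by simp
    next
      case False
      have "\<bar>TT p z w\<bar> * norm w powr (-p) \<le> Mf * gq p z * (norm w powr (-p) + gq p (z+w) + gq p (z-w))"
        unfolding Mf_def by (rule TT_far[OF p1(2) w0])
      also have "\<dots> \<le> M' * gq p z * (norm w powr (-p) + gq p (z+w) + gq p (z-w))"
        using g Mf0 by (intro mult_mono) (auto simp: M'_def)
      finally show ?thesis using False by simp
    qed
  qed
  moreover have "0 \<le> M'" using M(1) by (simp add: M'_def)
  ultimately show ?thesis using M(2,3) unfolding p_def by blast
qed



lemma nn_integral_reflect:
  fixes h :: "real \<Rightarrow> ennreal"
  assumes [measurable]: "h \<in> borel_measurable borel"
  shows "(\<integral>\<^sup>+t. h (-t) \<partial>lborel) = (\<integral>\<^sup>+t. h t \<partial>lborel)"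
  using nn_integral_real_affine[of h "-1" 0] by simp

lemma nn_integral_powr_01:
  fixes s :: real assumes "0 \<le> s" "s < 1"
  shows "(\<integral>\<^sup>+t. ennreal (indicator {0..1} t * t powr (-s)) \<partial>lborel) < \<infinity>"
proof -
  have "((\<lambda>x. x powr (-s)) has_integral (1 powr (-s+1)/(-s+1))) {0..1}"
    by (rule has_integral_powr_from_0) (use assms in auto)
  then have "((\<lambda>x. if x \<in> {0..1} then x powr (-s) else 0) has_integral (1/(1-s))) UNIV"
    by (subst has_integral_restrict_UNIV) simp
  moreover have "(\<lambda>x. if x \<in> {0..1} then x powr (-s) else 0) = (\<lambda>x. indicator {0..1} x * x powr (-s))"
    by (auto simp: indicator_def)
  ultimately have "((\<lambda>x. indicator {0..1} x * x powr (-s)) has_integral (1/(1-s))) UNIV" by simp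
  then have "(\<integral>\<^sup>+t. ennreal (indicator {0..1} t * t powr (-s)) \<partial>lborel) = ennreal (1/(1-s))"
    by (intro nn_integral_has_integral_lborel) (auto simp: indicator_def)
  then show ?thesis by simp
qed

lemma nn_integral_powr_inf:
  fixes r :: real assumes "1 < r"
  shows "(\<integral>\<^sup>+t. ennreal ((1+t) powr (-r)) * indicator {0..} t \<partial>lborel) < \<infinity>"
proof -
  define F where "F = (\<lambda>x::real. - ((1+x) powr (1-r)) / (r-1))"
  have "(\<integral>\<^sup>+t. ennreal ((1+t) powr (-r)) * indicator {0..} t \<partial>lborel) = 0 - F 0"
  proof (rule nn_integral_FTC_atLeast)
    show "(\<lambda>x. (1+x) powr (-r)) \<in> borel_measurable borel" by measurable
    show "DERIV F x :> (1+x) powr (-r)" if "0 \<le> x" for x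
    proof -
      have d1: "DERIV (\<lambda>x. 1 + x) x :> 1" by (auto intro!: derivative_eq_intros)
      have dd: "DERIV (\<lambda>x. (1+x) powr (1-r)) x :> (1-r) * (1+x) powr ((1-r) - of_nat 1) * 1"
        by (rule DERIV_fun_powr[OF d1]) (use that in auto)
      have "DERIV (\<lambda>x. - ((1+x) powr (1-r)) / (r-1)) x :> - ((1-r) * (1+x) powr ((1-r) - of_nat 1) * 1) / (r-1)"
        using DERIV_cdivide[OF DERIV_minus[OF dd], of "r-1"] by simp
      moreover have "- ((1-r) * (1+x) powr ((1-r) - of_nat 1) * 1) / (r-1) = (1+x) powr (-r)"
        using assms by (simp add: field_simps)
      ultimately show ?thesis unfolding F_def by simp
    qed
    show "0 \<le> (1+x) powr (-r)" for x by simp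
    show "(F \<longlongrightarrow> 0) at_top"
    proof -
      have "((\<lambda>x::real. (1+x) powr (1-r)) \<longlongrightarrow> 0) at_top"
        using assms by (intro tendsto_neg_powr filterlim_tendsto_add_at_top[OF tendsto_const filterlim_ident]) auto
      then have "((\<lambda>x::real. - ((1+x) powr (1-r)) / (r-1)) \<longlongrightarrow> - 0 / (r-1)) at_top"
        by (intro tendsto_divide tendsto_minus tendsto_const) (use assms in auto)
      then show ?thesis unfolding F_def by simp
    qed
  qed
  then show ?thesis by simp
qed

definition phiN :: "real \<Rightarrow> real \<Rightarrow> ennreal" where
  "phiN s t = indicator {-1..1} t * (if t = 0 then \<infinity> else ennreal (\<bar>t\<bar> powr (-s)))"

definition psi :: "real \<Rightarrow> real \<Rightarrow> ennreal" where
  "psi r t = ennreal ((1 + \<bar>t\<bar>) powr (-r))"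

lemma phiN_measurable[measurable]: "phiN s \<in> borel_measurable borel"
  unfolding phiN_def by measurable

lemma psi_measurable[measurable]: "psi r \<in> borel_measurable borel"
  unfolding psi_def by measurable

lemma phiN_finite:
  assumes "0 \<le> s" "s < 1"
  shows "(\<integral>\<^sup>+t. phiN s t \<partial>lborel) < \<infinity>"
proof -
  define k where "k = (\<lambda>u. ennreal (indicator {0..1} u * u powr (-s)))"
  have [measurable]: "k \<in> borel_measurable borel" unfolding k_def by measurable
  have "(\<integral>\<^sup>+t. phiN s t \<partial>lborel) \<le> (\<integral>\<^sup>+t. k t + k (-t) \<partial>lborel)"
  proof (intro nn_integral_mono_AE)
    show "AE t in lborel. phiN s t \<le> k t + k (-t)"
      using AE_lborel_singleton[of 0]
    proof eventually_elim
      case (elim t)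
      show ?case
      proof (cases "0 < t")
        case True
        then have "phiN s t = k t" by (auto simp: phiN_def k_def indicator_def)
        then show ?thesis by simp
      next
        case False
        then have "phiN s t = k (-t)" using elim by (auto simp: phiN_def k_def indicator_def)
        then show ?thesis by simp
      qed
    qed
  qed
  also have "\<dots> = (\<integral>\<^sup>+t. k t \<partial>lborel) + (\<integral>\<^sup>+t. k (-t) \<partial>lborel)"
    by (rule nn_integral_add) auto
  also have "\<dots> = 2 * (\<integral>\<^sup>+t. k t \<partial>lborel)" by (simp add: nn_integral_reflect mult_2)
  also have "\<dots> < \<infinity>" using nn_integral_powr_01[OF assms] by (simp add: k_def ennreal_mult_less_top)
  finally show ?thesis .
qed

lemma psi_finite:
  assumes "1 < r"
  shows "(\<integral>\<^sup>+t. psi r t \<partial>lborel) < \<infinity>"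
proof -
  define k where "k = (\<lambda>u. ennreal ((1+u) powr (-r)) * indicator {0..} u)"
  have [measurable]: "k \<in> borel_measurable borel" unfolding k_def by measurable
  have "(\<integral>\<^sup>+t. psi r t \<partial>lborel) \<le> (\<integral>\<^sup>+t. k t + k (-t) \<partial>lborel)"
  proof (intro nn_integral_mono)
    fix t :: real
    show "psi r t \<le> k t + k (-t)"
    proof (cases "0 \<le> t")
      case True
      then have "psi r t = k t" by (auto simp: psi_def k_def indicator_def)
      then show ?thesis by simp
    next
      case False
      then have "psi r t = k (-t)" by (auto simp: psi_def k_def indicator_def)
      then show ?thesis by simp
    qed
  qed
  also have "\<dots> = (\<integral>\<^sup>+t. k t \<partial>lborel) + (\<integral>\<^sup>+t. k (-t) \<partial>lborel)"
    by (rule nn_integral_add) auto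
  also have "\<dots> = 2 * (\<integral>\<^sup>+t. k t \<partial>lborel)" by (simp add: nn_integral_reflect mult_2)
  also have "\<dots> < \<infinity>" using nn_integral_powr_inf[OF assms] by (simp add: k_def ennreal_mult_less_top)
  finally show ?thesis .
qed

lemma nn_integral_prod_affine:
  fixes \<phi> :: "real \<Rightarrow> ennreal" and t :: "'a::euclidean_space" and a :: real
  assumes [measurable]: "\<phi> \<in> borel_measurable borel" and a: "a \<noteq> 0"
  shows "(\<integral>\<^sup>+y. (\<Prod>b\<in>Basis. \<phi> (t \<bullet> b + a * (y \<bullet> b))) \<partial>lborel)
     = ennreal (1/\<bar>a\<bar>) ^ DIM('a) * (\<integral>\<^sup>+x. \<phi> x \<partial>lborel) ^ DIM('a)"
proof -
  have "(\<integral>\<^sup>+y. (\<Prod>b\<in>Basis. \<phi> (t \<bullet> b + a * (y \<bullet> b))) \<partial>lborel)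
      = (\<Prod>b\<in>Basis. (\<integral>\<^sup>+x. \<phi> (t \<bullet> b + a * x) \<partial>lborel))"
    by (rule nn_integral_lborel_prod) auto
  also have "\<dots> = (\<Prod>b\<in>(Basis::'a set). ennreal (1/\<bar>a\<bar>) * (\<integral>\<^sup>+x. \<phi> x \<partial>lborel))"
  proof (intro prod.cong refl)
    fix b :: 'a
    have "(\<integral>\<^sup>+x. \<phi> x \<partial>lborel) = ennreal \<bar>a\<bar> * (\<integral>\<^sup>+x. \<phi> (t \<bullet> b + a * x) \<partial>lborel)"
      by (rule nn_integral_real_affine) (use a in auto)
    then have "ennreal (1/\<bar>a\<bar>) * (\<integral>\<^sup>+x. \<phi> x \<partial>lborel)
        = ennreal (1/\<bar>a\<bar>) * ennreal \<bar>a\<bar> * (\<integral>\<^sup>+x. \<phi> (t \<bullet> b + a * x) \<partial>lborel)"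
      by (simp add: mult.assoc)
    also have "ennreal (1/\<bar>a\<bar>) * ennreal \<bar>a\<bar> = 1" using a by (simp add: ennreal_mult[symmetric])
    finally show "(\<integral>\<^sup>+x. \<phi> (t \<bullet> b + a * x) \<partial>lborel) = ennreal (1/\<bar>a\<bar>) * (\<integral>\<^sup>+x. \<phi> x \<partial>lborel)"
      by simp
  qed
  also have "\<dots> = ennreal (1/\<bar>a\<bar>) ^ DIM('a) * (\<integral>\<^sup>+x. \<phi> x \<partial>lborel) ^ DIM('a)"
    by (simp add: prod.distrib power_mult_distrib)
  finally show ?thesis .
qed



lemma near_prod:
  fixes w :: "'a::euclidean_space" and q :: real
  assumes "0 \<le> q" "w \<noteq> 0" "norm w \<le> 1"
  shows "ennreal (norm w powr (-q)) \<le> (\<Prod>b\<in>Basis. phiN (q / DIM('a)) (w \<bullet> b))"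
proof -
  define s where "s = q / DIM('a)"
  have s0: "0 \<le> s" using assms by (simp add: s_def)
  have ind: "indicator {-1..1} (w \<bullet> b) = (1::ennreal)" if "b \<in> Basis" for b
  proof -
    have "\<bar>w \<bullet> b\<bar> \<le> 1" using Basis_le_norm[OF that, of w] assms by simp
    then show ?thesis by (auto simp: indicator_def abs_le_iff)
  qed
  show ?thesis
  proof (cases "\<exists>b\<in>Basis. w \<bullet> b = 0")
    case True
    have "(\<Prod>b\<in>Basis. phiN s (w \<bullet> b)) = top"
      unfolding ennreal_prod_eq_top
    proof (intro conjI)
      show "\<forall>b\<in>Basis. phiN s (w \<bullet> b) \<noteq> 0"
        using ind by (auto simp: phiN_def)
      show "\<exists>b\<in>Basis. phiN s (w \<bullet> b) = top"
        using True ind by (auto simp: phiN_def)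
    qed simp
    then show ?thesis by (simp add: s_def)
  next
    case False
    have "(\<Prod>b\<in>Basis. phiN s (w \<bullet> b)) = (\<Prod>b\<in>Basis. ennreal (\<bar>w \<bullet> b\<bar> powr (-s)))"
      using False ind by (intro prod.cong) (auto simp: phiN_def)
    also have "\<dots> = ennreal (\<Prod>b\<in>Basis. \<bar>w \<bullet> b\<bar> powr (-s))" by (rule prod_ennreal) simp
    finally have eq: "(\<Prod>b\<in>Basis. phiN s (w \<bullet> b)) = ennreal (\<Prod>b\<in>Basis. \<bar>w \<bullet> b\<bar> powr (-s))" .
    have "(\<Prod>b\<in>(Basis::'a set). norm w powr (-s)) \<le> (\<Prod>b\<in>Basis. \<bar>w \<bullet> b\<bar> powr (-s))"
    proof (intro prod_mono conjI)
      fix b :: 'a assume b: "b \<in> Basis"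
      show "0 \<le> norm w powr (-s)" by simp
      show "norm w powr (-s) \<le> \<bar>w \<bullet> b\<bar> powr (-s)"
        using False b Basis_le_norm[OF b, of w] s0 by (intro powr_mono2') auto
    qed
    moreover have "(\<Prod>b\<in>(Basis::'a set). norm w powr (-s)) = norm w powr (-q)"
      using assms by (simp add: powr_power s_def)
    ultimately show ?thesis using eq unfolding s_def by (metis ennreal_leI)
  qed
qed

lemma far_prod:
  fixes w :: "'a::euclidean_space" and r :: real
  assumes "0 \<le> r"
  shows "ennreal ((1 + norm w) powr (-r)) \<le> (\<Prod>b\<in>Basis. psi (r / DIM('a)) (w \<bullet> b))"
proof -
  define s where "s = r / DIM('a)"
  have s0: "0 \<le> s" using assms by (simp add: s_def)
  have "(\<Prod>b\<in>Basis. psi s (w \<bullet> b)) = ennreal (\<Prod>b\<in>Basis. (1 + \<bar>w \<bullet> b\<bar>) powr (-s))"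
    unfolding psi_def by (rule prod_ennreal) simp
  moreover have le: "(\<Prod>b\<in>(Basis::'a set). (1 + norm w) powr (-s)) \<le> (\<Prod>b\<in>Basis. (1 + \<bar>w \<bullet> b\<bar>) powr (-s))"
  proof (intro prod_mono conjI)
    fix b :: 'a assume b: "b \<in> Basis"
    show "0 \<le> (1 + norm w) powr (-s)" by simp
    show "(1 + norm w) powr (-s) \<le> (1 + \<bar>w \<bullet> b\<bar>) powr (-s)"
      using Basis_le_norm[OF b, of w] s0 by (intro powr_mono2') auto
  qed
  moreover have "(\<Prod>b\<in>(Basis::'a set). (1 + norm w) powr (-s)) = (1 + norm w) powr (-r)"
  proof -
    have "1 + norm w \<noteq> 0" using norm_ge_zero[of w] by linarith
    then show ?thesis by (simp add: powr_power s_def)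
  qed
  ultimately show ?thesis unfolding s_def by (metis ennreal_leI)
qed

lemma normpow_le:
  fixes w :: "'a::real_normed_vector" and p :: real
  assumes "1 \<le> norm w" "0 \<le> p"
  shows "norm w powr (-p) \<le> 2 powr p * (1 + norm w) powr (-p)"
proof -
  have "(2 * norm w) powr (-p) \<le> (1 + norm w) powr (-p)"
    using assms by (intro powr_mono2') auto
  moreover have "(2 * norm w) powr (-p) = 2 powr (-p) * norm w powr (-p)" by (simp add: powr_mult)
  moreover have "2 powr p * 2 powr (-p) = (1::real)" by (simp add: powr_add[symmetric])
  ultimately have "2 powr p * (2 powr (-p) * norm w powr (-p)) \<le> 2 powr p * (1 + norm w) powr (-p)"
    by (intro mult_left_mono) auto
  then show ?thesis using \<open>2 powr p * 2 powr (-p) = (1::real)\<close> by (simp add: mult.assoc[symmetric])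
qed

lemma gq_le:
  fixes u :: "'a::real_normed_vector" and p :: real
  assumes "0 \<le> p"
  shows "gq p u \<le> 2 powr p * (1 + norm u) powr (-p)"
proof -
  have pos: "0 < 1 + norm u" using norm_ge_zero[of u] by linarith
  have "(1 + norm u) powr p \<le> 2 powr p * (1 + norm u powr p)" by (rule one_plus_powr_le) (use assms in auto)
  then have "1 / (1 + norm u powr p) \<le> 2 powr p / (1 + norm u) powr p"
  proof -
    have "\<And>a b c::real. 0<a \<Longrightarrow> 0<c \<Longrightarrow> c \<le> b*a \<Longrightarrow> 1/a \<le> b/c" by (simp add: field_simps)
    moreover have "0 < 1 + norm u powr p" by (simp add: add_pos_nonneg)
    moreover have "0 < (1 + norm u) powr p" using pos by simp
    ultimately show ?thesis using \<open>(1 + norm u) powr p \<le> 2 powr p * (1 + norm u powr p)\<close> by (simp add: mult.commute)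
  qed
  also have "\<dots> = 2 powr p * (1 + norm u) powr (-p)" by (simp add: powr_minus_divide)
  finally show ?thesis by (simp add: gq_def)
qed



lemma G_bound:
  fixes \<alpha> :: real
  assumes "0 < \<alpha>" "\<alpha> < 2"
  shows "\<exists>M\<ge>0. \<exists>s. 0 \<le> s \<and> s < 1 \<and> (\<forall>z w::'a::euclidean_space. w \<noteq> 0 \<longrightarrow>
    ennreal (\<bar>TT (DIM('a)+\<alpha>) z w\<bar> * norm w powr (-(DIM('a)+\<alpha>))) \<le> ennreal (M * gq (DIM('a)+\<alpha>) z) *
      ((\<Prod>b\<in>Basis. phiN s (w \<bullet> b))
       + ennreal (2 powr (DIM('a)+\<alpha>)) * (\<Prod>b\<in>Basis. psi ((DIM('a)+\<alpha>)/DIM('a)) (w \<bullet> b))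
       + ennreal (2 powr (DIM('a)+\<alpha>)) * (\<Prod>b\<in>Basis. psi ((DIM('a)+\<alpha>)/DIM('a)) ((z+w) \<bullet> b))
       + ennreal (2 powr (DIM('a)+\<alpha>)) * (\<Prod>b\<in>Basis. psi ((DIM('a)+\<alpha>)/DIM('a)) ((z-w) \<bullet> b))))"
proof -
  define d :: real where "d = DIM('a)"
  define p where "p = d + \<alpha>"
  have d1: "1 \<le> d" by (simp add: d_def DIM_positive Suc_le_eq)
  have p0: "0 \<le> p" using assms d1 by (simp add: p_def)
  obtain M \<beta> where M: "M \<ge> 0" "\<alpha> < \<beta>" "\<beta> \<le> d + \<alpha>" "\<And>z w::'a. w \<noteq> 0 \<Longrightarrow>
     \<bar>TT (d+\<alpha>) z w\<bar> * norm w powr (-(d+\<alpha>)) \<le> M * gq (d+\<alpha>) z *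
       ((if norm w \<le> 1 then norm w powr (\<beta> - (d+\<alpha>)) else norm w powr (-(d+\<alpha>)))
        + gq (d+\<alpha>) (z+w) + gq (d+\<alpha>) (z-w))"
    using TT_bound[OF assms d1, where 'a='a] by blast
  define s where "s = (p - \<beta>) / d"
  have s: "0 \<le> s" "s < 1" using M(2,3) d1 by (auto simp: s_def p_def field_simps)
  define P where "P = ennreal (2 powr p)"
  have "ennreal (\<bar>TT p z w\<bar> * norm w powr (-p)) \<le> ennreal (M * gq p z) *
      ((\<Prod>b\<in>Basis. phiN s (w \<bullet> b))
       + P * (\<Prod>b\<in>Basis. psi (p/d) (w \<bullet> b))
       + P * (\<Prod>b\<in>Basis. psi (p/d) ((z+w) \<bullet> b))
       + P * (\<Prod>b\<in>Basis. psi (p/d) ((z-w) \<bullet> b)))" if w0: "w \<noteq> 0" for z w :: 'a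
  proof -
    define Near where "Near = (if norm w \<le> 1 then norm w powr (\<beta> - p) else norm w powr (-p))"
    have g: "0 \<le> gq p u" for u :: 'a by (rule less_imp_le[OF gq_pos(1)])
    have N0: "0 \<le> Near" by (simp add: Near_def)
    have Mg: "0 \<le> M * gq p z" using M(1) g by simp
    have "ennreal (\<bar>TT p z w\<bar> * norm w powr (-p)) \<le> ennreal (M * gq p z * (Near + gq p (z+w) + gq p (z-w)))"
      using M(4)[OF w0, of z] unfolding Near_def p_def by (intro ennreal_leI) simp
    also have "\<dots> = ennreal (M * gq p z) * (ennreal Near + ennreal (gq p (z+w)) + ennreal (gq p (z-w)))"
      using Mg N0 g by (simp add: ennreal_mult ennreal_plus[symmetric] del: ennreal_plus)
    also have "\<dots> \<le> ennreal (M * gq p z) *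
      (((\<Prod>b\<in>Basis. phiN s (w \<bullet> b)) + P * (\<Prod>b\<in>Basis. psi (p/d) (w \<bullet> b)))
       + P * (\<Prod>b\<in>Basis. psi (p/d) ((z+w) \<bullet> b))
       + P * (\<Prod>b\<in>Basis. psi (p/d) ((z-w) \<bullet> b)))"
    proof (intro mult_left_mono add_mono)
      show "ennreal Near \<le> (\<Prod>b\<in>Basis. phiN s (w \<bullet> b)) + P * (\<Prod>b\<in>Basis. psi (p/d) (w \<bullet> b))"
      proof (cases "norm w \<le> 1")
        case True
        have "ennreal Near = ennreal (norm w powr (-(p - \<beta>)))" using True by (simp add: Near_def)
        also have "\<dots> \<le> (\<Prod>b\<in>Basis. phiN ((p-\<beta>) / DIM('a)) (w \<bullet> b))"
          by (rule near_prod) (use M(3) w0 True in \<open>auto simp: p_def\<close>)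
        finally show ?thesis unfolding s_def d_def by (simp add: add_increasing2)
      next
        case False
        have "ennreal Near = ennreal (norm w powr (-p))" using False by (simp add: Near_def)
        also have "\<dots> \<le> ennreal (2 powr p * (1 + norm w) powr (-p))"
          using False p0 by (intro ennreal_leI normpow_le) auto
        also have "\<dots> = P * ennreal ((1 + norm w) powr (-p))" by (simp add: P_def ennreal_mult)
        also have "\<dots> \<le> P * (\<Prod>b\<in>Basis. psi (p/d) (w \<bullet> b))"
          unfolding d_def by (intro mult_left_mono far_prod p0) auto
        finally show ?thesis by (simp add: add_increasing)
      qed
      show "ennreal (gq p (z+w)) \<le> P * (\<Prod>b\<in>Basis. psi (p/d) ((z+w) \<bullet> b))"
      proof -
        have "ennreal (gq p (z+w)) \<le> ennreal (2 powr p * (1 + norm (z+w)) powr (-p))"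
          by (intro ennreal_leI gq_le p0)
        also have "\<dots> = P * ennreal ((1 + norm (z+w)) powr (-p))" by (simp add: P_def ennreal_mult)
        also have "\<dots> \<le> P * (\<Prod>b\<in>Basis. psi (p/d) ((z+w) \<bullet> b))"
          unfolding d_def by (intro mult_left_mono far_prod p0) auto
        finally show ?thesis .
      qed
      show "ennreal (gq p (z-w)) \<le> P * (\<Prod>b\<in>Basis. psi (p/d) ((z-w) \<bullet> b))"
      proof -
        have "ennreal (gq p (z-w)) \<le> ennreal (2 powr p * (1 + norm (z-w)) powr (-p))"
          by (intro ennreal_leI gq_le p0)
        also have "\<dots> = P * ennreal ((1 + norm (z-w)) powr (-p))" by (simp add: P_def ennreal_mult)
        also have "\<dots> \<le> P * (\<Prod>b\<in>Basis. psi (p/d) ((z-w) \<bullet> b))"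
          unfolding d_def by (intro mult_left_mono far_prod p0) auto
        finally show ?thesis .
      qed
    qed simp
    finally show ?thesis by (simp add: add.assoc)
  qed
  then show ?thesis using M(1) s unfolding p_def P_def d_def by blast
qed



lemma lborel_reflect: "distr lborel borel uminus = (lborel :: 'a::euclidean_space measure)"
proof -
  have "(\<lambda>x::'a. 0 + (-1) *\<^sub>R x) = uminus" by auto
  then show ?thesis using lborel_affine[of "-1" "0::'a"] by (simp add: density_1)
qed

lemma integral_reflect:
  fixes f :: "'a::euclidean_space \<Rightarrow> real"
  assumes [measurable]: "f \<in> borel_measurable borel"
  shows "(LINT y|lborel. f (-y)) = (LINT y|lborel. f y)"
proof -
  have "(LINT y|lborel. f y) = integral\<^sup>L (distr lborel borel uminus) f" by (simp add: lborel_reflect)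
  also have "\<dots> = (LINT y|lborel. f (-y))" by (rule integral_distr) auto
  finally show ?thesis by simp
qed

lemma integrable_reflect:
  fixes f :: "'a::euclidean_space \<Rightarrow> real"
  assumes [measurable]: "f \<in> borel_measurable borel" and "integrable lborel f"
  shows "integrable lborel (\<lambda>y. f (-y))"
proof -
  have "integrable (distr lborel borel uminus) f" using assms(2) by (simp add: lborel_reflect)
  then show ?thesis by (subst (asm) integrable_distr_eq) auto
qed

lemma psi_prod_integral_finite:
  fixes t :: "'a::euclidean_space"
  assumes "1 < r" "a \<noteq> 0"
  shows "(\<integral>\<^sup>+y. (\<Prod>b\<in>Basis. psi r (t \<bullet> b + a * (y \<bullet> b))) \<partial>lborel) < \<infinity>"
  using psi_finite[OF assms(1)] assms
  by (simp add: nn_integral_prod_affine ennreal_mult_less_top power_less_top_ennreal)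

lemma tail_integrable:
  fixes \<epsilon> p :: real
  assumes "0 < \<epsilon>" "DIM('a) < p"
  shows "integrable lborel (\<lambda>y::'a::euclidean_space. indicator {y. \<epsilon> < norm y} y * norm y powr (-p))"
proof (rule integrableI_bounded)
  have p0: "0 \<le> p" using assms by simp
  show "(\<lambda>y::'a. indicator {y. \<epsilon> < norm y} y * norm y powr (-p)) \<in> borel_measurable lborel"
    by measurable
  have "(\<integral>\<^sup>+y. ennreal (norm (indicator {y. \<epsilon> < norm y} y * norm y powr (-p))) \<partial>(lborel::'a measure))
     \<le> (\<integral>\<^sup>+y. ennreal (\<epsilon> powr (-p) * 2 powr p) * (\<Prod>b\<in>Basis. psi (p / DIM('a)) (0 \<bullet> b + (1/\<epsilon>) * (y \<bullet> b))) \<partial>(lborel::'a measure))"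
  proof (intro nn_integral_mono)
    fix y :: 'a
    show "ennreal (norm (indicator {y. \<epsilon> < norm y} y * norm y powr (-p)))
      \<le> ennreal (\<epsilon> powr (-p) * 2 powr p) * (\<Prod>b\<in>Basis. psi (p / DIM('a)) (0 \<bullet> b + (1/\<epsilon>) * (y \<bullet> b)))"
    proof (cases "\<epsilon> < norm y")
      case True
      define u where "u = (1/\<epsilon>) *\<^sub>R y"
      have nu: "norm u = norm y / \<epsilon>" using assms by (simp add: u_def)
      have u1: "1 \<le> norm u" using True assms by (simp add: nu)
      have "norm y powr (-p) = (\<epsilon> * norm u) powr (-p)" using assms by (simp add: nu)
      also have "\<dots> = \<epsilon> powr (-p) * norm u powr (-p)" using assms by (simp add: powr_mult)
      finally have eq: "norm y powr (-p) = \<epsilon> powr (-p) * norm u powr (-p)" .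
      have "ennreal (norm (indicator {y. \<epsilon> < norm y} y * norm y powr (-p))) = ennreal (\<epsilon> powr (-p) * norm u powr (-p))"
        using True eq by simp
      also have "\<dots> \<le> ennreal (\<epsilon> powr (-p) * (2 powr p * (1 + norm u) powr (-p)))"
        using normpow_le[OF u1 p0] by (intro ennreal_leI mult_left_mono) auto
      also have "\<dots> = ennreal (\<epsilon> powr (-p) * 2 powr p) * ennreal ((1 + norm u) powr (-p))"
        by (simp add: ennreal_mult[symmetric] mult.assoc)
      also have "\<dots> \<le> ennreal (\<epsilon> powr (-p) * 2 powr p) * (\<Prod>b\<in>Basis. psi (p / DIM('a)) (u \<bullet> b))"
        by (intro mult_left_mono far_prod p0) auto
      also have "(\<Prod>b\<in>Basis. psi (p / DIM('a)) (u \<bullet> b)) = (\<Prod>b\<in>Basis. psi (p / DIM('a)) (0 \<bullet> b + (1/\<epsilon>) * (y \<bullet> b)))"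
        by (simp add: u_def)
      finally show ?thesis .
    next
      case False
      then show ?thesis by simp
    qed
  qed
  also have "\<dots> = ennreal (\<epsilon> powr (-p) * 2 powr p) * (\<integral>\<^sup>+y. (\<Prod>b\<in>Basis. psi (p / DIM('a)) (0 \<bullet> b + (1/\<epsilon>) * (y \<bullet> b))) \<partial>(lborel::'a measure))"
    by (rule nn_integral_cmult) measurable
  also have "\<dots> < \<infinity>"
  proof -
    have "1 < p / DIM('a)" using assms by (simp add: field_simps DIM_positive)
    then show ?thesis using psi_prod_integral_finite[of "p / DIM('a)" "1/\<epsilon>" "0::'a"] assms
      by (simp add: ennreal_mult_less_top)
  qed
  finally show "(\<integral>\<^sup>+y. ennreal (norm (indicator {y. \<epsilon> < norm y} y * norm y powr (-p))) \<partial>(lborel::'a measure)) < \<infinity>" .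
qed



lemma main_bound:
  fixes K :: "'a::euclidean_space \<Rightarrow> 'a \<Rightarrow> real" and \<alpha> CK :: real
  assumes alpha: "0 < \<alpha>" "\<alpha> < 2" and CK: "0 \<le> CK"
    and meas: "\<And>x. (\<lambda>y. K x y) \<in> borel_measurable lborel"
    and symm: "\<And>x y. K x (-y) = K x y"
    and Kpos: "\<And>x y. 0 \<le> K x y"
    and Kb: "\<And>x y. y \<noteq> 0 \<Longrightarrow> K x y \<le> CK * norm y powr (-(DIM('a)+\<alpha>))"
  shows "\<exists>D>0. \<forall>a>0. \<forall>x. \<bar>Lalpha K (\<lambda>z. gq (DIM('a)+\<alpha>) (a *\<^sub>R z)) x\<bar> \<le> D * a powr \<alpha> * gq (DIM('a)+\<alpha>) (a *\<^sub>R x)"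
proof -
  define d :: nat where "d = DIM('a)"
  define p :: real where "p = DIM('a) + \<alpha>"
  have p0: "0 < p" using alpha by (simp add: p_def)
  have pd: "real d < p" using alpha by (simp add: p_def d_def)
  obtain M s where M: "M \<ge> 0" "0 \<le> s" "s < 1" and Gb: "\<And>z w::'a. w \<noteq> 0 \<Longrightarrow>
    ennreal (\<bar>TT p z w\<bar> * norm w powr (-p)) \<le> ennreal (M * gq p z) *
      ((\<Prod>b\<in>Basis. phiN s (w \<bullet> b))
       + ennreal (2 powr p) * (\<Prod>b\<in>Basis. psi (p/d) (w \<bullet> b))
       + ennreal (2 powr p) * (\<Prod>b\<in>Basis. psi (p/d) ((z+w) \<bullet> b))
       + ennreal (2 powr p) * (\<Prod>b\<in>Basis. psi (p/d) ((z-w) \<bullet> b)))"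
    using G_bound[OF alpha, where 'a='a] unfolding p_def d_def by blast
  define P where "P = ennreal (2 powr p)"
  define IN where "IN = (\<integral>\<^sup>+t. phiN s t \<partial>lborel)"
  define IP where "IP = (\<integral>\<^sup>+t. psi (p/d) t \<partial>lborel)"
  have IN: "IN < \<infinity>" unfolding IN_def by (rule phiN_finite[OF M(2,3)])
  have rp: "1 < p / d" using pd by (simp add: d_def field_simps DIM_positive)
  have IP: "IP < \<infinity>" unfolding IP_def by (rule psi_finite[OF rp])
  define Cst where "Cst = IN ^ d + 3 * P * IP ^ d"
  have Cst: "Cst < \<infinity>" using IN IP
    by (simp add: Cst_def P_def ennreal_mult_less_top power_less_top_ennreal)
  define Cr where "Cr = enn2real Cst"
  have CstCr: "Cst = ennreal Cr" using Cst by (simp add: Cr_def)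
  have Cr0: "0 \<le> Cr" by (simp add: Cr_def)
  define D where "D = CK * M * Cr + 1"
  have D0: "0 < D" using CK M Cr0 by (simp add: D_def add_nonneg_pos)
  have "\<bar>Lalpha K (\<lambda>z. gq p (a *\<^sub>R z)) x\<bar> \<le> D * a powr \<alpha> * gq p (a *\<^sub>R x)" if a0: "0 < a" for a x
  proof -
    define h where "h = (\<lambda>z::'a. gq p (a *\<^sub>R z))"
    have [measurable]: "h \<in> borel_measurable borel" unfolding h_def gq_def by measurable
    have [measurable]: "(\<lambda>y. K x y) \<in> borel_measurable borel" using meas[of x] by simp
    define f where "f = (\<lambda>y. (h x - (h (x+y) + h (x-y))/2) * K x y)"
    have f_meas[measurable]: "f \<in> borel_measurable borel" unfolding f_def by measurable
    have hTT: "h x - (h (x+y) + h (x-y))/2 = TT p (a *\<^sub>R x) (a *\<^sub>R y)" for y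
      by (simp add: h_def TT_def scaleR_add_right scaleR_diff_right)
    define BigA where "BigA = (\<lambda>y::'a.
        (\<Prod>b\<in>Basis. phiN s (0 \<bullet> b + a * (y \<bullet> b)))
       + P * (\<Prod>b\<in>Basis. psi (p/d) (0 \<bullet> b + a * (y \<bullet> b)))
       + P * (\<Prod>b\<in>Basis. psi (p/d) ((a *\<^sub>R x) \<bullet> b + a * (y \<bullet> b)))
       + P * (\<Prod>b\<in>Basis. psi (p/d) ((a *\<^sub>R x) \<bullet> b + (-a) * (y \<bullet> b))))"
    have BigA_meas[measurable]: "BigA \<in> borel_measurable borel" unfolding BigA_def by measurable
    have pw: "ennreal (norm (f y)) \<le> ennreal (CK * a powr p) * ennreal (M * gq p (a *\<^sub>R x)) * BigA y"
      if y0: "y \<noteq> 0" for y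
    proof -
      have ay0: "a *\<^sub>R y \<noteq> 0" using y0 a0 by simp
      have ny: "norm y powr (-p) = a powr p * norm (a *\<^sub>R y) powr (-p)"
      proof -
        have "norm (a *\<^sub>R y) powr (-p) = a powr (-p) * norm y powr (-p)"
          using a0 by (simp add: powr_mult)
        moreover have "a powr p * a powr (-p) = 1" using a0 by (simp add: powr_add[symmetric])
        ultimately show ?thesis by (simp add: mult.assoc[symmetric])
      qed
      have "norm (f y) = \<bar>TT p (a *\<^sub>R x) (a *\<^sub>R y)\<bar> * K x y"
        unfolding f_def hTT using Kpos[of x y] by (simp add: abs_mult)
      also have "\<dots> \<le> \<bar>TT p (a *\<^sub>R x) (a *\<^sub>R y)\<bar> * (CK * norm y powr (-p))"
        using Kb[OF y0, of x] by (intro mult_left_mono) (auto simp: p_def)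
      also have "\<dots> = (CK * a powr p) * (\<bar>TT p (a *\<^sub>R x) (a *\<^sub>R y)\<bar> * norm (a *\<^sub>R y) powr (-p))"
        by (simp add: ny algebra_simps)
      finally have "ennreal (norm (f y)) \<le> ennreal ((CK * a powr p) * (\<bar>TT p (a *\<^sub>R x) (a *\<^sub>R y)\<bar> * norm (a *\<^sub>R y) powr (-p)))"
        by (rule ennreal_leI)
      also have "\<dots> = ennreal (CK * a powr p) * ennreal (\<bar>TT p (a *\<^sub>R x) (a *\<^sub>R y)\<bar> * norm (a *\<^sub>R y) powr (-p))"
        using CK by (simp add: ennreal_mult)
      also have "\<dots> \<le> ennreal (CK * a powr p) * (ennreal (M * gq p (a *\<^sub>R x)) * BigA y)"
      proof (intro mult_left_mono)
        have "(a *\<^sub>R x) + (a *\<^sub>R y) = a *\<^sub>R x + a *\<^sub>R y" by simp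
        show "ennreal (\<bar>TT p (a *\<^sub>R x) (a *\<^sub>R y)\<bar> * norm (a *\<^sub>R y) powr (-p)) \<le> ennreal (M * gq p (a *\<^sub>R x)) * BigA y"
          using Gb[OF ay0, of "a *\<^sub>R x"]
          by (simp add: BigA_def P_def inner_add_left inner_diff_left algebra_simps)
      qed simp
      finally show ?thesis by (simp add: mult.assoc)
    qed
    have intBigA: "(\<integral>\<^sup>+y. BigA y \<partial>(lborel::'a measure)) = ennreal (1/a) ^ d * Cst"
    proof -
      have "(\<integral>\<^sup>+y. BigA y \<partial>(lborel::'a measure)) =
          (\<integral>\<^sup>+y. (\<Prod>b\<in>Basis. phiN s (0 \<bullet> b + a * (y \<bullet> b))) \<partial>(lborel::'a measure))
        + P * (\<integral>\<^sup>+y. (\<Prod>b\<in>Basis. psi (p/d) (0 \<bullet> b + a * (y \<bullet> b))) \<partial>(lborel::'a measure))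
        + P * (\<integral>\<^sup>+y. (\<Prod>b\<in>Basis. psi (p/d) ((a *\<^sub>R x) \<bullet> b + a * (y \<bullet> b))) \<partial>(lborel::'a measure))
        + P * (\<integral>\<^sup>+y. (\<Prod>b\<in>Basis. psi (p/d) ((a *\<^sub>R x) \<bullet> b + (-a) * (y \<bullet> b))) \<partial>(lborel::'a measure))"
        unfolding BigA_def
        apply (subst nn_integral_add, measurable, measurable)+
        apply (subst nn_integral_cmult, measurable)+
        done
      also have "\<dots> = ennreal (1/a) ^ d * IN ^ d + P * (ennreal (1/a) ^ d * IP ^ d)
          + P * (ennreal (1/a) ^ d * IP ^ d) + P * (ennreal (1/a) ^ d * IP ^ d)"
      proof -
        have an: "a \<noteq> 0" "-a \<noteq> 0" using a0 by auto
        have e1: "(\<integral>\<^sup>+y. (\<Prod>b\<in>Basis. phiN s (0 \<bullet> b + a * (y \<bullet> b))) \<partial>(lborel::'a measure)) = ennreal (1/\<bar>a\<bar>) ^ DIM('a) * IN ^ DIM('a)"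
          unfolding IN_def by (rule nn_integral_prod_affine) (use an in auto)
        have e2: "(\<integral>\<^sup>+y. (\<Prod>b\<in>Basis. psi (p/d) (0 \<bullet> b + a * (y \<bullet> b))) \<partial>(lborel::'a measure)) = ennreal (1/\<bar>a\<bar>) ^ DIM('a) * IP ^ DIM('a)"
          unfolding IP_def by (rule nn_integral_prod_affine) (use an in auto)
        have e3: "(\<integral>\<^sup>+y. (\<Prod>b\<in>Basis. psi (p/d) ((a *\<^sub>R x) \<bullet> b + a * (y \<bullet> b))) \<partial>(lborel::'a measure)) = ennreal (1/\<bar>a\<bar>) ^ DIM('a) * IP ^ DIM('a)"
          unfolding IP_def by (rule nn_integral_prod_affine) (use an in auto)
        have e4: "(\<integral>\<^sup>+y. (\<Prod>b\<in>Basis. psi (p/d) ((a *\<^sub>R x) \<bullet> b + (-a) * (y \<bullet> b))) \<partial>(lborel::'a measure)) = ennreal (1/\<bar>-a\<bar>) ^ DIM('a) * IP ^ DIM('a)"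
          unfolding IP_def by (rule nn_integral_prod_affine) (use an in auto)
        show ?thesis unfolding e1 e2 e3 e4 using a0 by (simp add: d_def)
      qed
      also have "\<dots> = ennreal (1/a) ^ d * Cst"
      proof -
        have three: "(3::ennreal) = 1 + 1 + 1" by simp
        show ?thesis unfolding Cst_def three by (simp only: distrib_left distrib_right mult_1 mult_1_right mult.assoc mult.commute mult.left_commute add.assoc)
      qed
      finally show ?thesis .
    qed
    define B where "B = CK * M * Cr * (a powr \<alpha> * gq p (a *\<^sub>R x))"
    have apow: "a powr p * (1/a) ^ d = a powr \<alpha>"
    proof -
      have "(1/a) ^ d = a powr (- real d)" using a0 by (simp add: powr_minus_divide powr_realpow power_one_over)
      then show ?thesis using a0 by (simp add: powr_add[symmetric] p_def d_def)
    qed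
    have g0: "0 \<le> gq p (a *\<^sub>R x)" by (rule less_imp_le[OF gq_pos(1)])
    have B0: "0 \<le> B" using CK M Cr0 g0 by (simp add: B_def)
    have intf: "(\<integral>\<^sup>+y. ennreal (norm (f y)) \<partial>lborel) \<le> ennreal B"
    proof -
      have "(\<integral>\<^sup>+y. ennreal (norm (f y)) \<partial>lborel) \<le>
          (\<integral>\<^sup>+y. ennreal (CK * a powr p) * ennreal (M * gq p (a *\<^sub>R x)) * BigA y \<partial>lborel)"
      proof (rule nn_integral_mono_AE)
        show "AE y in lborel. ennreal (norm (f y)) \<le> ennreal (CK * a powr p) * ennreal (M * gq p (a *\<^sub>R x)) * BigA y"
          using AE_lborel_singleton[of "0::'a"]
        proof eventually_elim
          case (elim y)
          then show ?case by (rule pw)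
        qed
      qed
      also have "\<dots> = ennreal (CK * a powr p) * ennreal (M * gq p (a *\<^sub>R x)) * (\<integral>\<^sup>+y. BigA y \<partial>lborel)"
        by (subst nn_integral_cmult) (auto simp: mult.assoc)
      also have "\<dots> = ennreal (CK * a powr p * (M * gq p (a *\<^sub>R x)) * (1/a) ^ d * Cr)"
        unfolding intBigA CstCr using CK M g0 a0 Cr0
        by (simp add: ennreal_mult ennreal_power[symmetric] mult.assoc)
      also have "CK * a powr p * (M * gq p (a *\<^sub>R x)) * (1/a) ^ d * Cr = B"
        using apow by (simp add: B_def algebra_simps)
      finally show ?thesis .
    qed
    have f_int: "integrable lborel f"
      by (rule integrableI_bounded) (use intf in \<open>auto simp: less_top[symmetric] top_unique\<close>)
    have L0bound: "\<bar>LINT y|lborel. f y\<bar> \<le> B"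
    proof -
      have "\<bar>LINT y|lborel. f y\<bar> \<le> (LINT y|lborel. \<bar>f y\<bar>)" by (rule integral_abs_bound)
      also have "\<dots> = enn2real (\<integral>\<^sup>+y. ennreal (\<bar>f y\<bar>) \<partial>lborel)"
        by (rule integral_eq_nn_integral) auto
      also have "\<dots> \<le> enn2real (ennreal B)"
        using intf by (intro enn2real_mono) auto
      also have "\<dots> = B" using B0 by simp
      finally show ?thesis .
    qed
    define L0 where "L0 = (LINT y|lborel. f y)"
    define F where "F = (\<lambda>\<epsilon>. LINT y|lborel. indicator {y. \<epsilon> < norm y} y * ((h x - h (x + y)) * K x y))"
    have Feq: "F \<epsilon> = (LINT y|lborel. indicator {y. \<epsilon> < norm y} y * f y)" if e0: "0 < \<epsilon>" for \<epsilon>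
    proof -
      define f1 where "f1 = (\<lambda>y. indicator {y. \<epsilon> < norm y} y * ((h x - h (x + y)) * K x y))"
      have f1m[measurable]: "f1 \<in> borel_measurable borel" unfolding f1_def by measurable
      have tail: "integrable lborel (\<lambda>y::'a. CK * (indicator {y. \<epsilon> < norm y} y * norm y powr (-p)))"
        using tail_integrable[OF e0, of p, where 'a='a] pd by (intro integrable_mult_right) (auto simp: d_def)
      have f1i: "integrable lborel f1"
      proof (rule Bochner_Integration.integrable_bound[OF tail])
        show "f1 \<in> borel_measurable lborel" by simp
        show "AE y in lborel. norm (f1 y) \<le> norm (CK * (indicator {y. \<epsilon> < norm y} y * norm y powr (-p)))"
        proof (intro AE_I2)
          fix y :: 'a
          show "norm (f1 y) \<le> norm (CK * (indicator {y. \<epsilon> < norm y} y * norm y powr (-p)))"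
          proof (cases "\<epsilon> < norm y")
            case True
            then have y0: "y \<noteq> 0" using e0 by auto
            have hb: "\<bar>h x - h (x+y)\<bar> \<le> 1"
              using gq_pos[of p "a *\<^sub>R x"] gq_pos[of p "a *\<^sub>R (x+y)"] unfolding h_def by (simp add: abs_le_iff)
            have "norm (f1 y) = \<bar>h x - h (x+y)\<bar> * K x y" using True Kpos[of x y] by (simp add: f1_def abs_mult)
            also have "\<dots> \<le> 1 * (CK * norm y powr (-p))"
              using hb Kb[OF y0, of x] Kpos[of x y] by (intro mult_mono) (auto simp: p_def)
            also have "\<dots> = norm (CK * (indicator {y. \<epsilon> < norm y} y * norm y powr (-p)))"
              using True CK by simp
            finally show ?thesis .
          qed (simp add: f1_def)
        qed
      qed
      have f1r: "integrable lborel (\<lambda>y. f1 (-y))" by (rule integrable_reflect[OF f1m f1i])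
      have f1neg: "f1 (-y) = indicator {y. \<epsilon> < norm y} y * ((h x - h (x - y)) * K x y)" for y
        by (simp add: f1_def symm indicator_def)
      have "(\<lambda>y. indicator {y. \<epsilon> < norm y} y * f y) = (\<lambda>y. (1/2) * (f1 y + f1 (-y)))"
        by (rule ext) (simp only: f1neg, simp add: f1_def f_def algebra_simps add_divide_distrib diff_divide_distrib)
      then have "(LINT y|lborel. indicator {y. \<epsilon> < norm y} y * f y) = (1/2) * (LINT y|lborel. f1 y + f1 (-y))"
        by simp
      also have "\<dots> = (1/2) * ((LINT y|lborel. f1 y) + (LINT y|lborel. f1 (-y)))"
        using f1i f1r by simp
      also have "\<dots> = (LINT y|lborel. f1 y)" by (simp add: integral_reflect[OF f1m])
      finally show ?thesis by (simp add: F_def f1_def)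
    qed
    define G where "G = (\<lambda>t. LINT y|lborel. indicator {y. inverse t < norm y} y * f y)"
    have Glim: "(G \<longlongrightarrow> L0) at_top"
      unfolding G_def L0_def
    proof (rule integral_dominated_convergence_at_top[where w="\<lambda>y. norm (f y)"])
      show "f \<in> borel_measurable lborel" by simp
      show "(\<lambda>y. indicator {y. inverse t < norm y} y * f y) \<in> borel_measurable lborel" for t
        by measurable
      show "integrable lborel (\<lambda>y. norm (f y))" using f_int by simp
      show "AE y in lborel. ((\<lambda>t. indicator {y. inverse t < norm y} y * f y) \<longlongrightarrow> f y) at_top"
        using AE_lborel_singleton[of "0::'a"]
      proof eventually_elim
        case (elim y)
        then have ny: "0 < norm y" by simp
        have "\<forall>\<^sub>F t in at_top. indicator {y. inverse t < norm y} y * f y = f y"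
          using eventually_gt_at_top[of "inverse (norm y)"]
        proof eventually_elim
          case (elim t)
          then have "0 < t" using ny by (meson inverse_positive_iff_positive less_trans)
          then have "inverse t < norm y" using elim ny
            by (metis inverse_inverse_eq inverse_less_iff_less inverse_positive_iff_positive)
          then show ?case by simp
        qed
        then show ?case by (rule tendsto_eventually)
      qed
      show "\<forall>\<^sub>F t in at_top. AE y in lborel. norm (indicator {y. inverse t < norm y} y * f y) \<le> norm (f y)"
        by (intro always_eventually allI AE_I2) (simp add: indicator_def)
    qed
    have "((\<lambda>\<epsilon>. G (inverse \<epsilon>)) \<longlongrightarrow> L0) (at_right 0)"
      by (rule filterlim_compose[OF Glim filterlim_inverse_at_top_right])
    moreover have "\<forall>\<^sub>F \<epsilon> in at_right 0. G (inverse \<epsilon>) = F \<epsilon>"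
      using eventually_at_right_less[of "0::real"]
      by eventually_elim (simp add: G_def Feq)
    ultimately have "(F \<longlongrightarrow> L0) (at_right 0)" by (rule Lim_transform_eventually)
    then have "Lalpha K h x = L0" unfolding Lalpha_def F_def[symmetric] by (intro tendsto_Lim) auto
    then have "\<bar>Lalpha K h x\<bar> \<le> B" using L0bound by (simp add: L0_def)
    also have "B \<le> D * a powr \<alpha> * gq p (a *\<^sub>R x)"
    proof -
      have "0 \<le> a powr \<alpha> * gq p (a *\<^sub>R x)" using g0 by simp
      then have "CK * M * Cr * (a powr \<alpha> * gq p (a *\<^sub>R x)) \<le> (CK * M * Cr + 1) * (a powr \<alpha> * gq p (a *\<^sub>R x))"
        by (intro mult_right_mono) auto
      then show ?thesis unfolding B_def D_def by (simp add: mult.assoc)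
    qed
    finally show ?thesis by (simp add: h_def)
  qed
  then show ?thesis using D0 unfolding p_def by blast
qed



lemma exp_powr_real: "exp (x::real) powr y = exp (x * y)"
  by (simp add: powr_def)

theorem lemma2p2:
  fixes K :: "real^'n \<Rightarrow> real^'n \<Rightarrow> real"
    and K' :: "(real^'n) \<Rightarrow> (real^'n) \<Rightarrow> ((real^'n) \<Rightarrow>\<^sub>L real)"
    and K'' :: "(real^'n) \<Rightarrow> (real^'n) \<Rightarrow> ((real^'n) \<Rightarrow>\<^sub>L ((real^'n) \<Rightarrow>\<^sub>L real))"
    and \<alpha> C\<^sub>K :: real
  assumes alpha: "0 < \<alpha>" "\<alpha> < 2"
    and pos: "\<And>x y. 0 < K x y"
    and periodic: "\<And>x y z. (\<forall>i. z $ i \<in> \<int>) \<Longrightarrow> K (x + z) y = K x y"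
    and deriv1: "\<And>x y. ((\<lambda>x. K x y) has_derivative blinfun_apply (K' x y)) (at x)"
    and deriv2: "\<And>x y. ((\<lambda>x. K' x y) has_derivative blinfun_apply (K'' x y)) (at x)"
    and cont2: "\<And>y. continuous_on UNIV (\<lambda>x. K'' x y)"
    and symm: "\<And>x y. K x (- y) = K x y"
    and meas: "\<And>x. (\<lambda>y. K x y) \<in> borel_measurable lborel"
    and CK: "0 < C\<^sub>K"
    and Kbound: "\<And>x y. y \<noteq> 0 \<Longrightarrow>
        inverse C\<^sub>K \<le> K x y * norm y powr (real CARD('n) + \<alpha>) \<and>
        K x y * norm y powr (real CARD('n) + \<alpha>) \<le> C\<^sub>K"
    and K'bound: "\<And>x y. y \<noteq> 0 \<Longrightarrow> norm (K' x y) * norm y powr (real CARD('n) + \<alpha>) \<le> C\<^sub>K"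
    and K''bound: "\<And>x y. y \<noteq> 0 \<Longrightarrow> norm (K'' x y) * norm y powr (real CARD('n) + \<alpha>) \<le> C\<^sub>K"
  shows "\<exists>D>0. \<forall>(lam::real) (x::real^'n) (t::real).
     \<bar>Lalpha K (\<lambda>z. 1 / (1 + exp (- lam * t) * norm z powr (real CARD('n) + \<alpha>))) x\<bar>
       \<le> D * exp (- \<alpha> * lam * t / (real CARD('n) + \<alpha>))
           / (1 + exp (- lam * t) * norm x powr (real CARD('n) + \<alpha>))"
proof -
  define p where "p = real CARD('n) + \<alpha>"
  have p0: "0 < p" using alpha by (simp add: p_def)
  have dim: "DIM(real^'n) = CARD('n)" by simp
  have Kb: "K x y \<le> C\<^sub>K * norm y powr (-(DIM(real^'n)+\<alpha>))" if y0: "y \<noteq> 0" for x y :: "real^'n"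
  proof -
    have np: "0 < norm y powr p" using y0 by simp
    have "K x y * norm y powr p \<le> C\<^sub>K" using Kbound[OF y0, of x] by (simp add: p_def)
    then have "K x y \<le> C\<^sub>K / norm y powr p" using np by (simp add: field_simps)
    also have "\<dots> = C\<^sub>K * norm y powr (-p)" by (simp add: powr_minus_divide divide_inverse)
    finally show ?thesis by (simp add: p_def)
  qed
  have CK0: "0 \<le> C\<^sub>K" using CK by simp
  have Kpos: "\<And>x y. 0 \<le> K x y" using pos by (simp add: less_imp_le)
  have mb: "\<exists>D>0. \<forall>a>0. \<forall>x::real^'n.
     \<bar>Lalpha K (\<lambda>z. gq (DIM(real^'n)+\<alpha>) (a *\<^sub>R z)) x\<bar> \<le> D * a powr \<alpha> * gq (DIM(real^'n)+\<alpha>) (a *\<^sub>R x)"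
    by (rule main_bound[OF alpha CK0 meas symm Kpos Kb])
  then obtain D where D: "D > 0 \<and> (\<forall>a>0. \<forall>x::real^'n.
     \<bar>Lalpha K (\<lambda>z. gq (DIM(real^'n)+\<alpha>) (a *\<^sub>R z)) x\<bar> \<le> D * a powr \<alpha> * gq (DIM(real^'n)+\<alpha>) (a *\<^sub>R x))" ..
  have D2: "\<bar>Lalpha K (\<lambda>z. gq p (a *\<^sub>R z)) x\<bar> \<le> D * a powr \<alpha> * gq p (a *\<^sub>R x)" if "0 < a" for a and x :: "real^'n"
  proof -
    have "\<forall>a>0. \<forall>x::real^'n.
     \<bar>Lalpha K (\<lambda>z. gq (DIM(real^'n)+\<alpha>) (a *\<^sub>R z)) x\<bar> \<le> D * a powr \<alpha> * gq (DIM(real^'n)+\<alpha>) (a *\<^sub>R x)"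
      using D by (rule conjunct2)
    then have "\<bar>Lalpha K (\<lambda>z. gq (DIM(real^'n)+\<alpha>) (a *\<^sub>R z)) x\<bar> \<le> D * a powr \<alpha> * gq (DIM(real^'n)+\<alpha>) (a *\<^sub>R x)"
      using that by blast
    then show ?thesis unfolding p_def dim .
  qed
  have "\<bar>Lalpha K (\<lambda>z. 1 / (1 + exp (- lam * t) * norm z powr p)) x\<bar>
       \<le> D * exp (- \<alpha> * lam * t / p) / (1 + exp (- lam * t) * norm x powr p)" for lam t and x :: "real^'n"
  proof -
    define a where "a = exp (- lam * t / p)"
    have a0: "0 < a" by (simp add: a_def)
    have ap: "a powr p = exp (- lam * t)"
    proof -
      have "a powr p = exp (- lam * t / p * p)" unfolding a_def by (rule exp_powr_real)
      also have "- lam * t / p * p = - lam * t" using p0 by simp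
      finally show ?thesis .
    qed
    have aa: "a powr \<alpha> = exp (- \<alpha> * lam * t / p)"
    proof -
      have "a powr \<alpha> = exp (- lam * t / p * \<alpha>)" unfolding a_def by (rule exp_powr_real)
      also have "- lam * t / p * \<alpha> = - \<alpha> * lam * t / p" by simp
      finally show ?thesis .
    qed
    have geq: "gq p (a *\<^sub>R z) = 1 / (1 + exp (- lam * t) * norm z powr p)" for z :: "real^'n"
    proof -
      have "norm (a *\<^sub>R z) = a * norm z" using a0 by simp
      then have "norm (a *\<^sub>R z) powr p = a powr p * norm z powr p"
        using a0 by (simp add: powr_mult)
      then show ?thesis unfolding gq_def ap by simp
    qed
    have "\<bar>Lalpha K (\<lambda>z. gq p (a *\<^sub>R z)) x\<bar> \<le> D * a powr \<alpha> * gq p (a *\<^sub>R x)"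
      by (rule D2[OF a0])
    moreover have eqf: "(\<lambda>z::real^'n. gq p (a *\<^sub>R z)) = (\<lambda>z. 1 / (1 + exp (- lam * t) * norm z powr p))"
      by (rule ext) (rule geq)
    ultimately show ?thesis by (simp only: eqf geq aa times_divide_eq_right mult_1_right)
  qed
  then show ?thesis using D unfolding p_def by blast
qed

end
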